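(* For every $s\in(0,1)$ (with $\alpha=s+2$) there exists $C>0$ such that for all $n\ge1$ and all $x,y\in\Lambda_n\times\{0\}$, $G_{D_n,\mathbf a}(x,y)\le C\,n^{\alpha-2}$.
   Context: Diamond graph $\mathcal D=\{(a,b)\in(\frac12\mathbb Z)^2:a+b\in\mathbb Z\}$, edges between points differing by $(\pm\frac12,\pm\frac12)$. $\Lambda_n=\{-n,\dots,n\}$, $L_n=\{(k,0):k\in\mathbb Z,|k|\ge n+1\}$, $D_n=\mathcal D\setminus L_n$. $Q_s$: kernel on $\mathbb N$ with $Q_s(0,1)=1$, $Q_s(r,r+1)=\max(\frac12-\frac s{4r},\frac14)$, $Q_s(r,r-1)=1-Q_s(r,r+1)$ for $r\ge1$. The random walk in conductances $\mathbf a=\mathbf a(s)$ on $\mathcal D$: its horizontal coordinate is a simple random walk on $\frac12\mathbb Z$; independently, its height $h$ evolves by: from $h=r/2$ with $r\ge1$ to $(r+1)/2$ with probability $Q_s(r,r+1)$, else to $(r-1)/2$; symmetrically for negative heights; from height $0$ to $\pm\frac12$ with probability $\frac12$ each. $G_{D_n,\mathbf a}(x,y)$ is the expected number of visits to $y$ by this walk started at $x$ before it first hits $L_n$. *)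

theory Defs
  imports "HOL-Analysis.Analysis"
begin

text \<open>Encoding: a point (a,b) of the diamond graph D (a,b in (1/2)Z, a+b in Z) is
represented by its doubled coordinates (u,v) = (2a,2b) :: int * int, with u+v even.
Edges of D correspond to steps (+-1,+-1) in doubled coordinates.\<close>

definition in_diamond :: "int \<times> int \<Rightarrow> bool" where
  "in_diamond p \<longleftrightarrow> even (fst p + snd p)"

definition Qup :: "real \<Rightarrow> nat \<Rightarrow> real" where
  "Qup s r = (if r = 0 then 1 else max (1/2 - s / (4 * real r)) (1/4))"

text \<open>Transition probability of the height (doubled: height h = v/2, r = |v|).\<close>
definition hstep :: "real \<Rightarrow> int \<Rightarrow> int \<Rightarrow> real" where
  "hstep s v v' =
    (if v = 0 then (if v' = 1 \<or> v' = -1 then 1/2 else 0)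
     else if v > 0 then
       (if v' = v + 1 then Qup s (nat v) else if v' = v - 1 then 1 - Qup s (nat v) else 0)
     else
       (if v' = v - 1 then Qup s (nat (-v)) else if v' = v + 1 then 1 - Qup s (nat (-v)) else 0))"

text \<open>One-step transition of the walk in conductances a(s): horizontal coordinate is
a simple random walk on (1/2)Z, independent of the height chain.\<close>
definition wstep :: "real \<Rightarrow> int \<times> int \<Rightarrow> int \<times> int \<Rightarrow> real" where
  "wstep s p q = (if \<bar>fst q - fst p\<bar> = 1 then 1/2 else 0) * hstep s (snd p) (snd q)"

text \<open>L_n = {(k,0) : k in Z, |k| >= n+1}, in doubled coordinates.\<close>
definition Lset :: "nat \<Rightarrow> (int \<times> int) set" where
  "Lset n = {p. snd p = 0 \<and> even (fst p) \<and> \<bar>fst p\<bar> \<ge> 2 * (int n + 1)}"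

definition nbrs :: "int \<times> int \<Rightarrow> (int \<times> int) set" where
  "nbrs q = (\<lambda>(i, j). (fst q + i, snd q + j)) ` ({-1, 1} \<times> {-1, 1})"

text \<open>killed_prob s n k x y = P_x(X_k = y and X_j \<notin> L_n for all j <= k).\<close>
fun killed_prob :: "real \<Rightarrow> nat \<Rightarrow> nat \<Rightarrow> int \<times> int \<Rightarrow> int \<times> int \<Rightarrow> real" where
  "killed_prob s n 0 x y = (if x = y \<and> x \<notin> Lset n then 1 else 0)"
| "killed_prob s n (Suc k) x y =
     (if y \<in> Lset n then 0
      else (\<Sum>z\<in>nbrs y. killed_prob s n k x z * wstep s z y))"

definition green :: "real \<Rightarrow> nat \<Rightarrow> int \<times> int \<Rightarrow> int \<times> int \<Rightarrow> ennreal" where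
  "green s n x y = (\<Sum>k. ennreal (killed_prob s n k x y))"

end

theory Submission
  imports Defs "HOL-Library.Groups_Big_Fun"
begin


lemma SA_fin_sup: "finite S \<Longrightarrow> (\<And>a. g a \<noteq> 0 \<Longrightarrow> a \<in> S) \<Longrightarrow> finite {a. g a \<noteq> (0::real)}"
  by (metis (mono_tags, lifting) mem_Collect_eq rev_finite_subset subsetI)

lemma SA_expand: "finite S \<Longrightarrow> (\<And>a. g a \<noteq> 0 \<Longrightarrow> a \<in> S) \<Longrightarrow> Sum_any g = sum g (S::'a set)"
  by (rule Sum_any.expand_superset) auto

lemma SA_swap:
  assumes "finite SA" "finite SB" "\<And>a b. g a b \<noteq> (0::real) \<Longrightarrow> a \<in> SA \<and> b \<in> SB"
  shows "Sum_any (\<lambda>a. Sum_any (g a)) = Sum_any (\<lambda>b. Sum_any (\<lambda>a. g a b))"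
  by (rule Sum_any.swap[of "SA \<times> SB"]) (use assms in auto)

lemma SA_cmult_right: "finite {a. g a \<noteq> 0} \<Longrightarrow> (c::real) * Sum_any g = Sum_any (\<lambda>a. c * g a)"
  by (rule Sum_any_right_distrib)

lemma SA_cmult_left: "finite {a. g a \<noteq> 0} \<Longrightarrow> Sum_any g * (c::real) = Sum_any (\<lambda>a. g a * c)"
  by (rule Sum_any_left_distrib)

lemma SA_add: "finite {a. g a \<noteq> 0} \<Longrightarrow> finite {a. h a \<noteq> 0} \<Longrightarrow>
   Sum_any (\<lambda>a. g a + h a) = Sum_any g + Sum_any (h::'a \<Rightarrow> real)"
  by (rule Sum_any.distrib)

lemma SA_sum:
  assumes "finite J" "\<And>j. j \<in> J \<Longrightarrow> finite {a. g j a \<noteq> (0::real)}"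
  shows "Sum_any (\<lambda>a. \<Sum>j\<in>J. g j a) = (\<Sum>j\<in>J. Sum_any (g j))"
  using assms
proof (induction J rule: finite_induct)
  case empty then show ?case by simp
next
  case (insert j J)
  have f1: "finite {a. g j a \<noteq> 0}" using insert by auto
  have f2: "finite {a. (\<Sum>j\<in>J. g j a) \<noteq> 0}"
  proof (rule finite_subset[of _ "\<Union>j\<in>J. {a. g j a \<noteq> 0}"])
    show "{a. (\<Sum>j\<in>J. g j a) \<noteq> 0} \<subseteq> (\<Union>j\<in>J. {a. g j a \<noteq> 0})"
      by (auto elim: sum.not_neutral_contains_not_neutral)
    show "finite (\<Union>j\<in>J. {a. g j a \<noteq> 0})" using insert by auto
  qed
  have "Sum_any (\<lambda>a. \<Sum>j\<in>insert j J. g j a) = Sum_any (\<lambda>a. g j a + (\<Sum>j\<in>J. g j a))"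
    using insert by simp
  also have "\<dots> = Sum_any (g j) + Sum_any (\<lambda>a. \<Sum>j\<in>J. g j a)"
    by (rule SA_add[OF f1 f2])
  finally show ?case using insert by simp
qed

lemma SA_mono:
  assumes "finite {a. g a \<noteq> 0}" "finite {a. h a \<noteq> 0}" "\<And>a. g a \<le> (h a::real)"
  shows "Sum_any g \<le> Sum_any h"
proof -
  let ?S = "{a. g a \<noteq> 0} \<union> {a. h a \<noteq> 0}"
  have "Sum_any g = sum g ?S" by (rule SA_expand) (use assms in auto)
  moreover have "Sum_any h = sum h ?S" by (rule SA_expand) (use assms in auto)
  ultimately show ?thesis using assms by (simp add: sum_mono)
qed

lemma SA_nonneg: "(\<And>a. 0 \<le> g a) \<Longrightarrow> 0 \<le> Sum_any (g::'a \<Rightarrow> real)"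
  unfolding Sum_any.expand_set by (auto intro: sum_nonneg)

lemma SA_ge_single:
  assumes "finite {a. g a \<noteq> 0}" "\<And>a. 0 \<le> g a"
  shows "g b \<le> Sum_any (g::'a \<Rightarrow> real)"
proof -
  have "Sum_any g = sum g ({a. g a \<noteq> 0} \<union> {b})" by (rule SA_expand) (use assms in auto)
  also have "\<dots> \<ge> sum g {b}" by (rule sum_mono2) (use assms in auto)
  finally show ?thesis by simp
qed

lemma SA_shift: "Sum_any (\<lambda>d::int. g (d + c)) = Sum_any g"
  by (rule Sum_any.reindex_cong[of "\<lambda>d. d + c", symmetric])
     (auto simp: bij_def inj_def image_def intro!: exI[of _ "_ - c"])

section \<open>One-step kernel\<close>

definition bx :: "int \<times> int \<Rightarrow> nat \<Rightarrow> (int \<times> int) set" where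
  "bx x r = {fst x - int r .. fst x + int r} \<times> {snd x - int r .. snd x + int r}"

lemma finite_box[simp]: "finite (bx x r)" by (simp add: bx_def)

lemma nbrs_eq: "nbrs q = {(fst q - 1, snd q - 1), (fst q - 1, snd q + 1), (fst q + 1, snd q - 1), (fst q + 1, snd q + 1)}"
  unfolding nbrs_def by auto

lemma finite_nbrs[simp]: "finite (nbrs q)" by (simp add: nbrs_eq)

lemma nbrs_sym: "w \<in> nbrs z \<longleftrightarrow> z \<in> nbrs w"
  unfolding nbrs_eq by (cases z; cases w) auto

lemma nbrs_box: "z \<in> bx x k \<Longrightarrow> w \<in> nbrs z \<Longrightarrow> w \<in> bx x (Suc k)"
  unfolding nbrs_eq bx_def by (cases z; cases x) auto

lemma box_mono: "k \<le> k' \<Longrightarrow> z \<in> bx x k \<Longrightarrow> z \<in> bx x k'"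
  unfolding bx_def by auto

lemma box_trans: "z \<in> bx x j \<Longrightarrow> w \<in> bx z i \<Longrightarrow> w \<in> bx x (j + i)"
  unfolding bx_def by auto

lemma Qup_eq: "1 \<le> r \<Longrightarrow> 0 \<le> s \<Longrightarrow> s \<le> 1 \<Longrightarrow> Qup s r = 1/2 - s/(4*real r)"
proof -
  assume a: "1 \<le> r" "0 \<le> s" "s \<le> 1"
  then have "s/(4*real r) \<le> 1/4" by (simp add: divide_simps)
  then show ?thesis using a unfolding Qup_def by auto
qed

locale sparam =
  fixes s :: real
  assumes s0: "0 < s" and s1: "s < 1"
begin

lemma hstep_up: "d \<noteq> 0 \<Longrightarrow> hstep s d (d+1) = 1/2 - s/(4*real_of_int d)"
proof -
  assume d: "d \<noteq> 0"
  show ?thesis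
  proof (cases "d > 0")
    case True
    then have "real (nat d) = real_of_int d" by simp
    then show ?thesis using True Qup_eq[of "nat d" s] s0 s1 unfolding hstep_def by auto
  next
    case False
    then have "real (nat (-d)) = - real_of_int d" using d by simp
    then show ?thesis using False d Qup_eq[of "nat (-d)" s] s0 s1 unfolding hstep_def by auto
  qed
qed

lemma hstep_dn: "d \<noteq> 0 \<Longrightarrow> hstep s d (d-1) = 1/2 + s/(4*real_of_int d)"
proof -
  assume d: "d \<noteq> 0"
  show ?thesis
  proof (cases "d > 0")
    case True
    then have "real (nat d) = real_of_int d" by simp
    then show ?thesis using True Qup_eq[of "nat d" s] s0 s1 unfolding hstep_def by auto
  next
    case False
    then have "real (nat (-d)) = - real_of_int d" using d by simp
    then show ?thesis using False d Qup_eq[of "nat (-d)" s] s0 s1 unfolding hstep_def by auto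
  qed
qed

lemma hstep_0: "hstep s 0 1 = 1/2" "hstep s 0 (-1) = 1/2"
  unfolding hstep_def by auto

lemma hstep_other: "e \<noteq> d + 1 \<Longrightarrow> e \<noteq> d - 1 \<Longrightarrow> hstep s d e = 0"
  unfolding hstep_def by auto

lemma small_ratio: "d \<noteq> 0 \<Longrightarrow> \<bar>s/(4*real_of_int d)\<bar> \<le> 1/4"
proof -
  assume "d \<noteq> 0"
  then have "1 \<le> \<bar>real_of_int d\<bar>" by linarith
  then show ?thesis using s0 s1 by (auto simp: abs_divide abs_mult divide_simps)
qed

lemma hstep_nonneg: "0 \<le> hstep s d e"
proof (cases "d = 0")
  case True then show ?thesis unfolding hstep_def by auto
next
  case False
  have r: "\<bar>s/(4*real_of_int d)\<bar> \<le> 1/4" by (rule small_ratio[OF False])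
  consider "e = d + 1" | "e = d - 1" | "e \<noteq> d + 1 \<and> e \<noteq> d - 1" by auto
  then show ?thesis
  proof cases
    case 1 then show ?thesis using hstep_up[OF False] r unfolding abs_le_iff by simp
  next
    case 2 then show ?thesis using hstep_dn[OF False] r unfolding abs_le_iff by simp
  next
    case 3 then show ?thesis using hstep_other by simp
  qed
qed

lemma hstep_sum: "hstep s d (d+1) + hstep s d (d-1) = 1"
  by (cases "d = 0") (auto simp: hstep_up hstep_dn hstep_0)

lemma wstep_nonneg: "0 \<le> wstep s z w"
  unfolding wstep_def using hstep_nonneg by auto

lemma wstep_nz: "wstep s z w \<noteq> 0 \<Longrightarrow> w \<in> nbrs z"
proof -
  assume a: "wstep s z w \<noteq> 0"
  then have 1: "\<bar>fst w - fst z\<bar> = 1" unfolding wstep_def by (auto split: if_splits)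
  have "hstep s (snd z) (snd w) \<noteq> 0" using a unfolding wstep_def by auto
  then have 2: "snd w = snd z + 1 \<or> snd w = snd z - 1" using hstep_other by blast
  show ?thesis using 1 2 unfolding nbrs_eq by (cases z; cases w) (auto simp: abs_eq_iff)
qed

lemma wstep_sum_nbrs: "(\<Sum>w\<in>nbrs z. wstep s z w * g w) =
   (hstep s (snd z) (snd z - 1) * (g (fst z - 1, snd z - 1) + g (fst z + 1, snd z - 1))
   + hstep s (snd z) (snd z + 1) * (g (fst z - 1, snd z + 1) + g (fst z + 1, snd z + 1))) / 2"
  unfolding nbrs_eq wstep_def by (cases z) (auto simp: algebra_simps)

lemma SA_wstep: "Sum_any (\<lambda>w. wstep s z w * g w) = (\<Sum>w\<in>nbrs z. wstep s z w * g w)"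
  by (rule SA_expand) (auto dest: wstep_nz)

lemma wstep_total: "Sum_any (\<lambda>w. wstep s z w) = 1"
  using SA_wstep[of z "\<lambda>_. 1"] wstep_sum_nbrs[of z "\<lambda>_. 1"] hstep_sum[of "snd z"] by simp

end


fun kp :: "real \<Rightarrow> (int \<times> int) set \<Rightarrow> nat \<Rightarrow> int \<times> int \<Rightarrow> int \<times> int \<Rightarrow> real" where
  "kp s A 0 x y = (if x = y \<and> x \<notin> A then 1 else 0)"
| "kp s A (Suc k) x y = (if y \<in> A then 0 else Sum_any (\<lambda>z. kp s A k x z * wstep s z y))"

definition fe :: "real \<Rightarrow> (int \<times> int) set \<Rightarrow> (int \<times> int) set \<Rightarrow> nat \<Rightarrow> int \<times> int \<Rightarrow> int \<times> int \<Rightarrow> real" where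
  "fe s A B j x b = (if b \<in> B then (case j of 0 \<Rightarrow> (if x = b then 1 else 0)
      | Suc i \<Rightarrow> Sum_any (\<lambda>z. kp s (A \<union> B) i x z * wstep s z b)) else 0)"

context sparam
begin

lemma wstep_box: "wstep s z w \<noteq> 0 \<Longrightarrow> w \<in> bx z 1"
  using wstep_nz nbrs_box[of z z 0] by (auto simp: bx_def)

lemma kp_nonneg: "0 \<le> kp s A k x y"
  by (induction k arbitrary: y) (auto intro!: SA_nonneg mult_nonneg_nonneg wstep_nonneg)

lemma kp_supp: "kp s A k x y \<noteq> 0 \<Longrightarrow> y \<in> bx x k"
proof (induction k arbitrary: y)
  case 0 then show ?case by (auto simp: bx_def split: if_splits)
next
  case (Suc k)
  then have "Sum_any (\<lambda>z. kp s A k x z * wstep s z y) \<noteq> 0" by (auto split: if_splits)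
  then obtain z where "kp s A k x z * wstep s z y \<noteq> 0"
    by (rule Sum_any.not_neutral_obtains_not_neutral)
  then have "z \<in> bx x k" "y \<in> nbrs z" using Suc.IH wstep_nz by auto
  then show ?case by (rule nbrs_box)
qed

lemma kp_fin: "finite {y. kp s A k x y \<noteq> 0}"
  by (rule SA_fin_sup[of "bx x k"]) (auto dest: kp_supp)

lemma kp_in_A: "y \<in> A \<Longrightarrow> kp s A k x y = 0"
  by (cases k) auto

lemma killed_eq: "killed_prob s n k x y = kp s (Lset n) k x y"
proof (induction k arbitrary: y)
  case 0 then show ?case by simp
next
  case (Suc k)
  have "(\<Sum>z\<in>nbrs y. kp s (Lset n) k x z * wstep s z y) = Sum_any (\<lambda>z. kp s (Lset n) k x z * wstep s z y)"
    by (rule SA_expand[symmetric]) (auto dest: wstep_nz simp: nbrs_sym)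
  then show ?case using Suc by simp
qed

lemma SA_swap2:
  fixes a :: "int \<times> int \<Rightarrow> real" and b :: "int \<times> int \<Rightarrow> int \<times> int \<Rightarrow> real"
  assumes ha: "\<And>z. a z \<noteq> 0 \<Longrightarrow> z \<in> bx x T" and hb: "\<And>z v. b z v \<noteq> 0 \<Longrightarrow> v \<in> bx z k"
  shows "Sum_any (\<lambda>v. Sum_any (\<lambda>z. a z * b z v) * c v) = Sum_any (\<lambda>z. a z * Sum_any (\<lambda>v. b z v * c v))"
proof -
  have "Sum_any (\<lambda>v. Sum_any (\<lambda>z. a z * b z v) * c v) = Sum_any (\<lambda>v. Sum_any (\<lambda>z. a z * b z v * c v))"
    by (rule Sum_any.cong, rule SA_cmult_left, rule SA_fin_sup[of "bx x T"]) (auto dest: ha)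
  also have "\<dots> = Sum_any (\<lambda>z. Sum_any (\<lambda>v. a z * b z v * c v))"
    by (rule SA_swap[of "bx x (T + k)" "bx x T"]) (auto dest: ha hb intro: box_trans)
  also have "\<dots> = Sum_any (\<lambda>z. a z * Sum_any (\<lambda>v. b z v * c v))"
  proof (rule Sum_any.cong)
    fix z
    have "finite {v. b z v * c v \<noteq> 0}"
      by (rule SA_fin_sup[of "bx z k"]) (simp, metis hb mult_zero_left)
    then show "Sum_any (\<lambda>v. a z * b z v * c v) = a z * Sum_any (\<lambda>v. b z v * c v)"
      by (simp add: SA_cmult_right mult.assoc)
  qed
  finally show ?thesis .
qed

lemma kp_CK: "kp s A (T + k) x w = Sum_any (\<lambda>z. kp s A T x z * kp s A k z w)"
proof (induction k arbitrary: w)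
  case 0
  have "Sum_any (\<lambda>z. kp s A T x z * kp s A 0 z w) = Sum_any (\<lambda>z. if z = w then kp s A T x w else 0)"
    by (rule Sum_any.cong) (auto simp: kp_in_A)
  then show ?case by simp
next
  case (Suc k)
  show ?case
  proof (cases "w \<in> A")
    case True then show ?thesis by (simp add: kp_in_A)
  next
    case False
    have "kp s A (T + Suc k) x w = Sum_any (\<lambda>v. kp s A (T + k) x v * wstep s v w)"
      using False by simp
    also have "\<dots> = Sum_any (\<lambda>v. Sum_any (\<lambda>z. kp s A T x z * kp s A k z v) * wstep s v w)"
      using Suc by simp
    also have "\<dots> = Sum_any (\<lambda>z. kp s A T x z * Sum_any (\<lambda>v. kp s A k z v * wstep s v w))"
      by (rule SA_swap2[where x=x and T=T and k=k]) (auto dest: kp_supp)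
    also have "\<dots> = Sum_any (\<lambda>z. kp s A T x z * kp s A (Suc k) z w)"
      using False by simp
    finally show ?thesis .
  qed
qed

lemma fe_nonneg: "0 \<le> fe s A B j x b"
  unfolding fe_def by (auto split: nat.splits intro!: SA_nonneg mult_nonneg_nonneg kp_nonneg wstep_nonneg)

lemma fe_supp: "fe s A B j x b \<noteq> 0 \<Longrightarrow> b \<in> bx x j"
proof -
  assume a: "fe s A B j x b \<noteq> 0"
  show ?thesis
  proof (cases j)
    case 0 then show ?thesis using a by (auto simp: fe_def bx_def split: if_splits)
  next
    case (Suc i)
    then have "Sum_any (\<lambda>z. kp s (A \<union> B) i x z * wstep s z b) \<noteq> 0" using a by (auto simp: fe_def split: if_splits)
    then obtain z where "kp s (A \<union> B) i x z * wstep s z b \<noteq> 0"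
      by (rule Sum_any.not_neutral_obtains_not_neutral)
    then have "kp s (A \<union> B) i x z \<noteq> 0" "wstep s z b \<noteq> 0" by auto
    then have "z \<in> bx x i" "b \<in> nbrs z" using kp_supp wstep_nz by blast+
    then show ?thesis using Suc by (simp add: nbrs_box)
  qed
qed

lemma fe_fin: "finite {b. fe s A B j x b \<noteq> 0}"
  by (rule SA_fin_sup[of "bx x j"]) (auto dest: fe_supp)

lemma FE:
  assumes AB: "A \<inter> B = {}"
  shows "kp s A k x w = kp s (A \<union> B) k x w + (\<Sum>j\<le>k. Sum_any (\<lambda>b. fe s A B j x b * kp s A (k - j) b w))"
proof (induction k arbitrary: w)
  case 0
  have "Sum_any (\<lambda>b. fe s A B 0 x b * kp s A 0 b w) =
      Sum_any (\<lambda>b. if b = x then (if x \<in> B \<and> x = w \<and> x \<notin> A then 1 else 0) else 0)"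
    by (rule Sum_any.cong) (auto simp: fe_def)
  then show ?case using AB by auto
next
  case (Suc k)
  show ?case
  proof (cases "w \<in> A")
    case True
    then show ?thesis by (simp add: kp_in_A)
  next
    case False
    let ?A' = "A \<union> B"
    let ?S = "\<lambda>z. (\<Sum>j\<le>k. Sum_any (\<lambda>b. fe s A B j x b * kp s A (k - j) b z))"
    have finw: "finite {z. g z * wstep s z w \<noteq> 0}" for g :: "int \<times> int \<Rightarrow> real"
      by (rule SA_fin_sup[of "nbrs w"]) (auto dest: wstep_nz simp: nbrs_sym)
    have "kp s A (Suc k) x w = Sum_any (\<lambda>z. (kp s ?A' k x z + ?S z) * wstep s z w)"
      using False Suc by simp
    also have "\<dots> = Sum_any (\<lambda>z. kp s ?A' k x z * wstep s z w) + Sum_any (\<lambda>z. ?S z * wstep s z w)"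
      unfolding distrib_right by (rule SA_add[OF finw finw])
    finally have eq1: "kp s A (Suc k) x w = Sum_any (\<lambda>z. kp s ?A' k x z * wstep s z w) + Sum_any (\<lambda>z. ?S z * wstep s z w)" .
    have p1: "Sum_any (\<lambda>z. kp s ?A' k x z * wstep s z w) = kp s ?A' (Suc k) x w + Sum_any (\<lambda>b. fe s A B (Suc k) x b * kp s A (Suc k - Suc k) b w)"
    proof -
      have "Sum_any (\<lambda>b. fe s A B (Suc k) x b * kp s A (Suc k - Suc k) b w) = Sum_any (\<lambda>b. if b = w then fe s A B (Suc k) x w else 0)"
        by (rule Sum_any.cong) (use False in auto)
      then show ?thesis using False by (auto simp: fe_def)
    qed
    have p2: "Sum_any (\<lambda>z. ?S z * wstep s z w) = (\<Sum>j\<le>k. Sum_any (\<lambda>b. fe s A B j x b * kp s A (Suc k - j) b w))"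
    proof -
      have "Sum_any (\<lambda>z. ?S z * wstep s z w) = Sum_any (\<lambda>z. \<Sum>j\<le>k. Sum_any (\<lambda>b. fe s A B j x b * kp s A (k - j) b z) * wstep s z w)"
        by (simp add: sum_distrib_right)
      also have "\<dots> = (\<Sum>j\<le>k. Sum_any (\<lambda>z. Sum_any (\<lambda>b. fe s A B j x b * kp s A (k - j) b z) * wstep s z w))"
        by (rule SA_sum[OF finite_atMost finw])
      also have "\<dots> = (\<Sum>j\<le>k. Sum_any (\<lambda>b. fe s A B j x b * Sum_any (\<lambda>z. kp s A (k - j) b z * wstep s z w)))"
        by (rule sum.cong[OF refl], rule SA_swap2[where x=x and T="_" and k="_"]) (auto dest: fe_supp kp_supp)
      also have "\<dots> = (\<Sum>j\<le>k. Sum_any (\<lambda>b. fe s A B j x b * kp s A (Suc k - j) b w))"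
        by (rule sum.cong[OF refl]) (use False in \<open>auto simp: Suc_diff_le\<close>)
      finally show ?thesis .
    qed
    show ?thesis using eq1 p1 p2 by simp
  qed
qed

lemma mass:
  "(\<Sum>j\<le>k. Sum_any (fe s A B j x)) + Sum_any (kp s (A \<union> B) k x) \<le> 1"
proof (induction k)
  case 0
  have "Sum_any (fe s A B 0 x) = Sum_any (\<lambda>b. if b = x then (if x \<in> B then 1 else 0) else 0)"
    by (rule Sum_any.cong) (auto simp: fe_def)
  moreover have "Sum_any (kp s (A \<union> B) 0 x) = Sum_any (\<lambda>b. if b = x then (if x \<notin> A \<union> B then 1 else 0) else 0)"
    by (rule Sum_any.cong) auto
  ultimately show ?case by auto
next
  case (Suc k)
  let ?A' = "A \<union> B"
  let ?F = "\<lambda>w. Sum_any (\<lambda>z. kp s ?A' k x z * wstep s z w)"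
  have pw: "fe s A B (Suc k) x w + kp s ?A' (Suc k) x w \<le> ?F w" for w
  proof -
    have "0 \<le> ?F w" by (auto intro!: SA_nonneg mult_nonneg_nonneg kp_nonneg wstep_nonneg)
    then show ?thesis by (auto simp: fe_def)
  qed
  have finF: "finite {w. ?F w \<noteq> 0}"
  proof (rule SA_fin_sup[of "bx x (Suc k)"])
    fix w assume "?F w \<noteq> 0"
    then obtain z where "kp s ?A' k x z * wstep s z w \<noteq> 0"
      by (rule Sum_any.not_neutral_obtains_not_neutral)
    then have "kp s ?A' k x z \<noteq> 0" "wstep s z w \<noteq> 0" by auto
    then show "w \<in> bx x (Suc k)" using kp_supp wstep_nz nbrs_box by blast
  qed simp
  have "Sum_any (fe s A B (Suc k) x) + Sum_any (kp s ?A' (Suc k) x) = Sum_any (\<lambda>w. fe s A B (Suc k) x w + kp s ?A' (Suc k) x w)"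
    by (rule SA_add[symmetric, OF fe_fin kp_fin])
  also have "\<dots> \<le> Sum_any ?F"
  proof (rule SA_mono[OF _ finF pw])
    show "finite {w. fe s A B (Suc k) x w + kp s ?A' (Suc k) x w \<noteq> 0}"
    proof (rule SA_fin_sup[of "bx x (Suc k)"])
      fix w assume "fe s A B (Suc k) x w + kp s ?A' (Suc k) x w \<noteq> 0"
      then have "fe s A B (Suc k) x w \<noteq> 0 \<or> kp s ?A' (Suc k) x w \<noteq> 0" by auto
      then show "w \<in> bx x (Suc k)" using fe_supp kp_supp by blast
    qed simp
  qed
  also have "\<dots> = Sum_any (\<lambda>w. Sum_any (\<lambda>z. kp s ?A' k x z * wstep s z w) * 1)" by simp
  also have "\<dots> = Sum_any (\<lambda>z. kp s ?A' k x z * Sum_any (\<lambda>w. wstep s z w * 1))"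
    by (rule SA_swap2[where x=x and T=k and k=1]) (auto dest: kp_supp wstep_box)
  also have "\<dots> = Sum_any (kp s ?A' k x)" using wstep_total by simp
  finally have "Sum_any (fe s A B (Suc k) x) + Sum_any (kp s ?A' (Suc k) x) \<le> Sum_any (kp s ?A' k x)" .
  then show ?case using Suc by simp
qed

end


fun hv :: "real \<Rightarrow> nat \<Rightarrow> int \<Rightarrow> real" where
  "hv s 0 d = (if d = 0 then 1 else 0)"
| "hv s (Suc k) d = hv s k (d-1) * hstep s (d-1) d + hv s k (d+1) * hstep s (d+1) d"

fun hh :: "nat \<Rightarrow> int \<Rightarrow> real" where
  "hh 0 d = (if d = 0 then 1 else 0)"
| "hh (Suc k) d = (hh k (d-1) + hh k (d+1)) / 2"

definition EV :: "real \<Rightarrow> nat \<Rightarrow> (int \<Rightarrow> real) \<Rightarrow> real" where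
  "EV s k g = Sum_any (\<lambda>d. hv s k d * g d)"

definition EH :: "nat \<Rightarrow> (int \<Rightarrow> real) \<Rightarrow> real" where
  "EH k g = Sum_any (\<lambda>d. hh k d * g d)"

lemma dual1:
  fixes K K' u v g :: "int \<Rightarrow> real"
  assumes rec: "\<And>d. K' d = K (d-1) * u (d-1) + K (d+1) * v (d+1)"
    and fin: "finite {d. K d \<noteq> 0}"
  shows "Sum_any (\<lambda>d. K' d * g d) = Sum_any (\<lambda>d. K d * (u d * g (d+1) + v d * g (d-1)))"
proof -
  have f1: "finite {d. K (d-1) * u (d-1) * g d \<noteq> 0}"
  proof (rule finite_subset[OF _ finite_imageI[OF fin, of "\<lambda>e. e + 1"]])
    show "{d. K (d-1) * u (d-1) * g d \<noteq> 0} \<subseteq> (\<lambda>e. e + 1) ` {d. K d \<noteq> 0}"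
    proof
      fix d assume "d \<in> {d. K (d-1) * u (d-1) * g d \<noteq> 0}"
      then have "K (d-1) \<noteq> 0" by auto
      then show "d \<in> (\<lambda>e. e + 1) ` {d. K d \<noteq> 0}" by (auto intro!: image_eqI[of _ _ "d - 1"])
    qed
  qed
  have f2: "finite {d. K (d+1) * v (d+1) * g d \<noteq> 0}"
  proof (rule finite_subset[OF _ finite_imageI[OF fin, of "\<lambda>e. e - 1"]])
    show "{d. K (d+1) * v (d+1) * g d \<noteq> 0} \<subseteq> (\<lambda>e. e - 1) ` {d. K d \<noteq> 0}"
    proof
      fix d assume "d \<in> {d. K (d+1) * v (d+1) * g d \<noteq> 0}"
      then have "K (d+1) \<noteq> 0" by auto
      then show "d \<in> (\<lambda>e. e - 1) ` {d. K d \<noteq> 0}" by (auto intro!: image_eqI[of _ _ "d + 1"])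
    qed
  qed
  have f3: "finite {d. K d * u d * g (d+1) \<noteq> 0}"
    by (rule finite_subset[OF _ fin]) auto
  have f4: "finite {d. K d * v d * g (d-1) \<noteq> 0}"
    by (rule finite_subset[OF _ fin]) auto
  have "Sum_any (\<lambda>d. K' d * g d) = Sum_any (\<lambda>d. K (d-1) * u (d-1) * g d + K (d+1) * v (d+1) * g d)"
    by (simp add: rec distrib_right)
  also have "\<dots> = Sum_any (\<lambda>d. K (d-1) * u (d-1) * g d) + Sum_any (\<lambda>d. K (d+1) * v (d+1) * g d)"
    by (rule SA_add[OF f1 f2])
  also have "Sum_any (\<lambda>d. K (d-1) * u (d-1) * g d) = Sum_any (\<lambda>d. K d * u d * g (d+1))"
    using SA_shift[of "\<lambda>d. K (d-1) * u (d-1) * g d" 1] by simp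
  also have "Sum_any (\<lambda>d. K (d+1) * v (d+1) * g d) = Sum_any (\<lambda>d. K d * v d * g (d-1))"
    using SA_shift[of "\<lambda>d. K (d+1) * v (d+1) * g d" "-1"] by simp
  also have "Sum_any (\<lambda>d. K d * u d * g (d+1)) + Sum_any (\<lambda>d. K d * v d * g (d-1))
     = Sum_any (\<lambda>d. K d * u d * g (d+1) + K d * v d * g (d-1))"
    by (rule SA_add[OF f3 f4, symmetric])
  finally show ?thesis by (simp add: algebra_simps)
qed

lemma hh_supp: "hh k d \<noteq> 0 \<Longrightarrow> \<bar>d\<bar> \<le> int k"
proof (induction k arbitrary: d)
  case 0 then show ?case by (auto split: if_splits)
next
  case (Suc k)
  then have "hh k (d-1) \<noteq> 0 \<or> hh k (d+1) \<noteq> 0" by auto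
  then show ?case using Suc.IH by fastforce
qed

lemma hh_fin: "finite {d. hh k d \<noteq> 0}"
  by (rule finite_subset[of _ "{-int k..int k}"]) (auto dest!: hh_supp simp: abs_le_iff)

lemma hh_nonneg: "0 \<le> hh k d"
  by (induction k arbitrary: d) auto

lemma hh_par: "hh k d \<noteq> 0 \<Longrightarrow> even (int k + d)"
proof (induction k arbitrary: d)
  case 0 then show ?case by (auto split: if_splits)
next
  case (Suc k)
  then have "hh k (d-1) \<noteq> 0 \<or> hh k (d+1) \<noteq> 0" by auto
  then have "even (int k + (d - 1)) \<or> even (int k + (d + 1))" using Suc.IH by blast
  then show ?case by presburger
qed

lemma EH_step: "EH (Suc k) g = EH k (\<lambda>d. (g (d+1) + g (d-1)) / 2)"
  unfolding EH_def
  by (subst dual1[where K="hh k" and u="\<lambda>_. 1/2" and v="\<lambda>_. 1/2"]) (auto simp: hh_fin field_simps intro!: Sum_any.cong)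

context sparam
begin

lemma hv_supp: "hv s k d \<noteq> 0 \<Longrightarrow> \<bar>d\<bar> \<le> int k"
proof (induction k arbitrary: d)
  case 0 then show ?case by (auto split: if_splits)
next
  case (Suc k)
  then have "hv s k (d-1) \<noteq> 0 \<or> hv s k (d+1) \<noteq> 0" by auto
  then show ?case using Suc.IH by fastforce
qed

lemma hv_fin: "finite {d. hv s k d \<noteq> 0}"
  by (rule finite_subset[of _ "{-int k..int k}"]) (auto dest!: hv_supp simp: abs_le_iff)

lemma hv_nonneg: "0 \<le> hv s k d"
  by (induction k arbitrary: d) (auto intro!: add_nonneg_nonneg mult_nonneg_nonneg hstep_nonneg)

lemma hv_par: "hv s k d \<noteq> 0 \<Longrightarrow> even (int k + d)"
proof (induction k arbitrary: d)
  case 0 then show ?case by (auto split: if_splits)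
next
  case (Suc k)
  then have "hv s k (d-1) \<noteq> 0 \<or> hv s k (d+1) \<noteq> 0" by auto
  then have "even (int k + (d - 1)) \<or> even (int k + (d + 1))" using Suc.IH by blast
  then show ?case by presburger
qed

lemma EV_step: "EV s (Suc k) g = EV s k (\<lambda>d. hstep s d (d+1) * g (d+1) + hstep s d (d-1) * g (d-1))"
  unfolding EV_def
  by (subst dual1[where K="hv s k" and u="\<lambda>d. hstep s d (d+1)" and v="\<lambda>d. hstep s d (d-1)"]) (auto simp: hv_fin)

lemma EV_mono: "(\<And>d. g d \<le> g' d) \<Longrightarrow> EV s k g \<le> EV s k g'"
  unfolding EV_def
  by (rule SA_mono) (auto intro!: mult_left_mono hv_nonneg intro: finite_subset[OF _ hv_fin])

lemma EV_add: "EV s k (\<lambda>d. g d + g' d) = EV s k g + EV s k g'"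
  unfolding EV_def distrib_left
  by (rule SA_add) (auto intro: finite_subset[OF _ hv_fin])

lemma EV_cmult: "EV s k (\<lambda>d. c * g d) = c * EV s k g"
  unfolding EV_def
  by (subst SA_cmult_right) (auto intro: finite_subset[OF _ hv_fin] simp: algebra_simps)

lemma EV_const: "EV s k (\<lambda>d. 1) = 1"
proof (induction k)
  case 0
  have "Sum_any (\<lambda>d. hv s 0 d * 1) = Sum_any (\<lambda>d::int. if d = 0 then 1 else 0)"
    by (rule Sum_any.cong) auto
  then show ?case by (simp add: EV_def)
next
  case (Suc k)
  then show ?case by (simp add: EV_step hstep_sum)
qed

lemma EV_delta: "EV s k (\<lambda>d. if d = 0 then 1 else 0) = hv s k 0"
proof -
  have "Sum_any (\<lambda>d. hv s k d * (if d = 0 then 1 else 0)) = Sum_any (\<lambda>d::int. if d = 0 then hv s k 0 else 0)"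
    by (rule Sum_any.cong) auto
  then show ?thesis by (simp add: EV_def)
qed

lemma EV_sq_step:
  "hstep s d (d+1) * (real_of_int (d+1))^2 + hstep s d (d-1) * (real_of_int (d-1))^2
     = (real_of_int d)^2 + (if d = 0 then 1 else 1 - s)"
proof (cases "d = 0")
  case True then show ?thesis by (simp add: hstep_0)
next
  case False
  then show ?thesis unfolding hstep_up[OF False] hstep_dn[OF False] by (simp add: field_simps power2_eq_square)
qed

lemma EV_4_step:
  "hstep s d (d+1) * (real_of_int (d+1))^4 + hstep s d (d-1) * (real_of_int (d-1))^4
     \<le> (real_of_int d)^4 + 6 * (real_of_int d)^2 + 1"
proof (cases "d = 0")
  case True then show ?thesis by (simp add: hstep_0)
next
  case False
  then have "hstep s d (d+1) * (real_of_int (d+1))^4 + hstep s d (d-1) * (real_of_int (d-1))^4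
     = (real_of_int d)^4 + 6 * (real_of_int d)^2 + 1 - 2 * s * (real_of_int d)^2 - 2 * s"
    unfolding hstep_up[OF False] hstep_dn[OF False] by (simp add: field_simps power2_eq_square power4_eq_xxxx)
  moreover have "0 \<le> 2 * s * (real_of_int d)^2 + 2 * s" using s0 by simp
  ultimately show ?thesis by linarith
qed

lemma EV_sq_bounds: "(1 - s) * real k \<le> EV s k (\<lambda>d. (real_of_int d)^2) \<and> EV s k (\<lambda>d. (real_of_int d)^2) \<le> real k"
proof (induction k)
  case 0
  have "Sum_any (\<lambda>d. hv s 0 d * (real_of_int d)^2) = 0"
    by (rule Sum_any.neutral[THEN subst[of _ _ "\<lambda>x. _ = x"], rotated], rule Sum_any.cong) auto
  then show ?case by (simp add: EV_def)
next
  case (Suc k)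
  have eq: "EV s (Suc k) (\<lambda>d. (real_of_int d)^2) = EV s k (\<lambda>d. (real_of_int d)^2) + EV s k (\<lambda>d. if d = 0 then 1 else 1 - s)"
    unfolding EV_step by (simp only: EV_sq_step EV_add)
  have "EV s k (\<lambda>d. if d = 0 then 1 else 1 - s) \<le> EV s k (\<lambda>d. 1)"
    by (rule EV_mono) (use s0 in auto)
  moreover have "EV s k (\<lambda>d. 1 - s) \<le> EV s k (\<lambda>d. if d = 0 then 1 else 1 - s)"
    by (rule EV_mono) (use s0 in auto)
  moreover have "EV s k (\<lambda>d. 1 - s) = 1 - s"
    using EV_cmult[where c="1-s" and g="\<lambda>d. 1" and k=k] EV_const by simp
  ultimately show ?case using eq Suc EV_const[of k] by (simp add: algebra_simps)
qed

lemma EV_4_bound: "EV s k (\<lambda>d. (real_of_int d)^4) \<le> 3 * (real k)^2"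
proof (induction k)
  case 0
  have "Sum_any (\<lambda>d. hv s 0 d * (real_of_int d)^4) = Sum_any (\<lambda>d::int. 0::real)"
    by (rule Sum_any.cong) auto
  then show ?case by (simp add: EV_def)
next
  case (Suc k)
  have "EV s (Suc k) (\<lambda>d. (real_of_int d)^4) \<le> EV s k (\<lambda>d. (real_of_int d)^4 + (6 * (real_of_int d)^2 + 1))"
    unfolding EV_step by (rule EV_mono) (use EV_4_step in \<open>simp add: add.assoc\<close>)
  also have "\<dots> = EV s k (\<lambda>d. (real_of_int d)^4) + 6 * EV s k (\<lambda>d. (real_of_int d)^2) + 1"
    by (simp add: EV_add EV_cmult EV_const)
  also have "\<dots> \<le> 3 * (real k)^2 + 6 * real k + 1" using Suc EV_sq_bounds[of k] by linarith
  also have "\<dots> \<le> 3 * (real (Suc k))^2" by (simp add: power2_eq_square algebra_simps)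
  finally show ?case .
qed

end


section \<open>Horizontal walk\<close>

lemma EH_mono: "(\<And>d. g d \<le> g' d) \<Longrightarrow> EH k g \<le> EH k g'"
  unfolding EH_def
  by (rule SA_mono) (auto intro!: mult_left_mono hh_nonneg intro: finite_subset[OF _ hh_fin])

lemma EH_add: "EH k (\<lambda>d. g d + g' d) = EH k g + EH k g'"
  unfolding EH_def distrib_left
  by (rule SA_add) (auto intro: finite_subset[OF _ hh_fin])

lemma EH_cmult: "EH k (\<lambda>d. c * g d) = c * EH k g"
  unfolding EH_def
  by (subst SA_cmult_right) (auto intro: finite_subset[OF _ hh_fin] simp: algebra_simps)

lemma EH_const: "EH k (\<lambda>d. 1) = 1"
proof (induction k)
  case 0
  have "Sum_any (\<lambda>d. hh 0 d * 1) = Sum_any (\<lambda>d::int. if d = 0 then 1 else 0)"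
    by (rule Sum_any.cong) auto
  then show ?case by (simp add: EH_def)
next
  case (Suc k)
  then show ?case by (simp add: EH_step)
qed

lemma EH_sq: "EH k (\<lambda>d. (real_of_int d)^2) = real k"
proof (induction k)
  case 0
  have "Sum_any (\<lambda>d. hh 0 d * (real_of_int d)^2) = Sum_any (\<lambda>d::int. 0::real)"
    by (rule Sum_any.cong) auto
  then show ?case by (simp add: EH_def)
next
  case (Suc k)
  have "EH (Suc k) (\<lambda>d. (real_of_int d)^2) = EH k (\<lambda>d. (real_of_int d)^2 + 1)"
    unfolding EH_step by (rule arg_cong[where f="EH k"]) (auto simp: power2_eq_square algebra_simps)
  then show ?case using Suc by (simp add: EH_add EH_const)
qed

lemma EH_4: "EH k (\<lambda>d. (real_of_int d)^4) \<le> 3 * (real k)^2"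
proof (induction k)
  case 0
  have "Sum_any (\<lambda>d. hh 0 d * (real_of_int d)^4) = Sum_any (\<lambda>d::int. 0::real)"
    by (rule Sum_any.cong) auto
  then show ?case by (simp add: EH_def)
next
  case (Suc k)
  have "EH (Suc k) (\<lambda>d. (real_of_int d)^4) = EH k (\<lambda>d. (real_of_int d)^4 + (6 * (real_of_int d)^2 + 1))"
    unfolding EH_step by (rule arg_cong[where f="EH k"]) (auto simp: power2_eq_square power4_eq_xxxx algebra_simps)
  also have "\<dots> = EH k (\<lambda>d. (real_of_int d)^4) + 6 * real k + 1"
    by (simp add: EH_add EH_cmult EH_const EH_sq)
  also have "\<dots> \<le> 3 * (real (Suc k))^2" using Suc by (simp add: power2_eq_square algebra_simps)
  finally show ?case .
qed

text \<open>Paley-Zygmund type bound.\<close>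
lemma EH_PZ:
  assumes "k \<ge> 1"
  shows "EH k (\<lambda>d. if (real_of_int d)^2 \<ge> real k / 2 then 1 else 0) \<ge> 1/12"
proof -
  let ?P = "EH k (\<lambda>d. if (real_of_int d)^2 \<ge> real k / 2 then 1 else 0)"
  have kp: "real k > 0" using assms by simp
  have pw: "(real_of_int d)^2 \<le> real k / 2 * 1 + ((1 / (12 * real k)) * (real_of_int d)^4 + (3 * real k) * (if (real_of_int d)^2 \<ge> real k / 2 then 1 else 0))" for d
  proof (cases "(real_of_int d)^2 \<ge> real k / 2")
    case True
    have "0 \<le> ((real_of_int d)^2 - 6 * real k)^2" by simp
    then have "12 * real k * (real_of_int d)^2 \<le> (real_of_int d)^4 + 36 * (real k)^2"
      by (simp add: power2_eq_square power4_eq_xxxx algebra_simps)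
    then have "(real_of_int d)^2 \<le> (real_of_int d)^4 / (12 * real k) + 3 * real k"
      using kp by (simp add: field_simps power2_eq_square)
    then show ?thesis using True kp by simp
  next
    case False
    have "0 \<le> 1 / (12 * real k) * (real_of_int d)^4" using kp by simp
    then show ?thesis using False by (simp only: if_False mult_zero_right add_0_right mult_1_right)
  qed
  have "real k = EH k (\<lambda>d. (real_of_int d)^2)" by (simp add: EH_sq)
  also have "\<dots> \<le> EH k (\<lambda>d. real k / 2 * 1 + ((1 / (12 * real k)) * (real_of_int d)^4 + (3 * real k) * (if (real_of_int d)^2 \<ge> real k / 2 then 1 else 0)))"
    by (rule EH_mono) (rule pw)
  also have "\<dots> = real k / 2 + (1 / (12 * real k)) * EH k (\<lambda>d. (real_of_int d)^4) + 3 * real k * ?P"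
    by (simp only: EH_add EH_cmult EH_const)
  also have "\<dots> \<le> real k / 2 + (1 / (12 * real k)) * (3 * (real k)^2) + 3 * real k * ?P"
    using EH_4[of k] kp by (intro add_mono mult_left_mono) auto
  finally have "real k \<le> real k / 2 + real k / 4 + 3 * real k * ?P"
    using kp by (simp add: power2_eq_square)
  then show ?thesis using kp by (simp add: field_simps)
qed

lemma hh_cf: "hh k (2 * int i - int k) = real (k choose i) / 2^k"
proof (induction k arbitrary: i)
  case 0 then show ?case by (cases i) auto
next
  case (Suc k)
  show ?case
  proof (cases i)
    case 0
    have a: "hh k (2 * int 0 - int k - 2) = 0"
      using hh_supp[of k "2 * int 0 - int k - 2"] by fastforce
    have b: "hh k (2 * int 0 - int k) = 1 / 2^k" using Suc.IH[of 0] by simp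
    have "hh (Suc k) (2 * int i - int (Suc k)) = (hh k (2 * int 0 - int k - 2) + hh k (2 * int 0 - int k)) / 2"
      using 0 by (simp add: algebra_simps)
    then show ?thesis using a b 0 by simp
  next
    case (Suc i')
    have "hh (Suc k) (2 * int i - int (Suc k)) = (hh k (2 * int i' - int k) + hh k (2 * int (Suc i') - int k)) / 2"
      using Suc by (simp add: algebra_simps)
    also have "\<dots> = (real (k choose i') + real (k choose Suc i')) / 2 ^ Suc k"
      using Suc.IH[of i'] Suc.IH[of "Suc i'"] by (simp add: field_simps)
    finally show ?thesis using Suc by (simp add: field_simps)
  qed
qed

lemma central_ratio: "real ((2 * Suc j) choose Suc j) * (real (Suc j))^2 = real ((2*j) choose j) * (2 * real j + 1) * (2 * real j + 2)"
proof -
  define X where "X = (2 * Suc j) choose Suc j"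
  define Y where "Y = (2 * j) choose j"
  have e1: "Suc (2*j) * Y = (Suc (2*j) choose Suc j) * Suc j"
    unfolding Y_def by (rule Suc_times_binomial_eq)
  have e2: "Suc (Suc (2*j)) * (Suc (2*j) choose j) = X * Suc j"
    unfolding X_def using Suc_times_binomial_eq[of "Suc (2*j)" j] by simp
  have e3: "(Suc (2*j) choose Suc j) = (Suc (2*j) choose j)"
    using binomial_symmetric[of "Suc j" "Suc (2*j)"] by simp
  have "X * Suc j * Suc j = Suc (Suc (2*j)) * (Suc (2*j) choose j) * Suc j" using e2 by simp
  also have "\<dots> = Suc (Suc (2*j)) * ((Suc (2*j) choose Suc j) * Suc j)" using e3 by simp
  also have "\<dots> = Suc (Suc (2*j)) * (Suc (2*j) * Y)" using e1 by simp
  finally have "X * Suc j * Suc j = Suc (Suc (2*j)) * (Suc (2*j) * Y)" .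
  then have "real (X * Suc j * Suc j) = real (Suc (Suc (2*j)) * (Suc (2*j) * Y))" by (rule arg_cong)
  then have "real X * (real j + 1) * (real j + 1) = (real j * 2 + 2) * ((real j * 2 + 1) * real Y)"
    by (simp only: of_nat_mult of_nat_Suc of_nat_add) (simp add: algebra_simps)
  then show ?thesis unfolding X_def[symmetric] Y_def[symmetric] by (simp add: power2_eq_square algebra_simps)
qed

lemma sq_helper: "((A::real) * B / C)^2 * E = A^2 * (B^2 * E) / C^2"
  by (simp add: power_divide power_mult_distrib mult_ac)

lemma central_bound: "(real ((2*j) choose j) / 4^j)^2 * (3 * real j + 1) \<le> 1"
proof (induction j)
  case 0 then show ?case by simp
next
  case (Suc j)
  let ?a = "real ((2*j) choose j) / 4^j"
  define X where "X = (2 * Suc j) choose Suc j"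
  have cr: "real X * (real (Suc j))^2 = real ((2*j) choose j) * (2 * real j + 1) * (2 * real j + 2)"
    unfolding X_def by (rule central_ratio)
  have r: "real X / 4^(Suc j) = ?a * (2 * real j + 1) / (2 * real j + 2)"
  proof -
    define Y where "Y = real ((2*j) choose j)"
    have cr': "real X * (real j + 1) * (real j + 1) = Y * (2 * real j + 1) * 2 * (real j + 1)"
      using cr unfolding Y_def by (simp add: power2_eq_square algebra_simps)
    have j1: "real j + 1 > 0" by simp
    have xe: "real X * (real j + 1) = Y * (2 * real j + 1) * 2"
      using cr' j1 by simp
    have p4: "(4::real)^j > 0" by simp
    have "real X / 4^(Suc j) = (real X * (real j + 1)) / (4 * 4^j * (real j + 1))"
      using j1 by simp
    also have "\<dots> = Y * (2 * real j + 1) * 2 / (4 * 4^j * (real j + 1))" using xe by simp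
    also have "\<dots> = Y * (2 * real j + 1) / (4^j * (2 * real j + 2))"
    proof -
      have d1: "4 * 4^j * (real j + 1) \<noteq> (0::real)" using j1 p4 by simp
      have d2: "4^j * (2 * real j + 2) \<noteq> (0::real)" using j1 p4 by simp
      show ?thesis by (simp only: frac_eq_eq[OF d1 d2]) (simp add: algebra_simps)
    qed
    also have "\<dots> = Y / 4^j * (2 * real j + 1) / (2 * real j + 2)" by simp
    finally show ?thesis unfolding Y_def .
  qed
  have ineq: "(2 * real j + 1)^2 * (3 * real j + 4) \<le> (2 * real j + 2)^2 * (3 * real j + 1)"
    by (simp add: power2_eq_square algebra_simps)
  have "(?a * (2 * real j + 1) / (2 * real j + 2))^2 * (3 * real (Suc j) + 1)
      = ?a^2 * ((2 * real j + 1)^2 * (3 * real j + 4)) / (2 * real j + 2)^2"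
  proof -
    have "3 * real (Suc j) + 1 = 3 * real j + 4" by simp
    then show ?thesis by (simp only: sq_helper)
  qed
  also have "\<dots> \<le> ?a^2 * ((2 * real j + 2)^2 * (3 * real j + 1)) / (2 * real j + 2)^2"
    by (intro divide_right_mono mult_left_mono ineq) auto
  also have "\<dots> = ?a^2 * (3 * real j + 1)" by simp
  also have "\<dots> \<le> 1" using Suc by simp
  finally show ?case using r unfolding X_def[symmetric] by simp
qed

lemma hh_diag: "k \<ge> 1 \<Longrightarrow> hh k 0 \<le> 1 / sqrt (real k)"
proof -
  assume k: "k \<ge> 1"
  show ?thesis
  proof (cases "even k")
    case False
    then have "hh k 0 = 0" using hh_par[of k 0] by auto
    then show ?thesis by simp
  next
    case True
    then obtain j where j: "k = 2 * j" by auto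
    with k have j1: "j \<ge> 1" by simp
    have "hh k 0 = hh k (2 * int j - int k)" using j by simp
    also have "\<dots> = real ((2*j) choose j) / 4^j" using hh_cf[of k j] j by (simp add: power_mult)
    finally have e: "hh k 0 = real ((2*j) choose j) / 4^j" .
    have nn: "0 \<le> hh k 0" by (rule hh_nonneg)
    have "(hh k 0)^2 * real k \<le> 1"
    proof -
      have "(hh k 0)^2 * real k \<le> (hh k 0)^2 * (3 * real j + 1)" using j by (intro mult_left_mono) auto
      also have "\<dots> \<le> 1" using central_bound[of j] e by simp
      finally show ?thesis .
    qed
    then have "(hh k 0 * sqrt (real k))^2 \<le> 1" by (simp add: power_mult_distrib)
    then have "hh k 0 * sqrt (real k) \<le> 1"
      using nn by (simp add: power_le_one_iff abs_le_iff)
    then show ?thesis using k by (simp add: field_simps)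
  qed
qed

section \<open>Factorisation of the free walk\<close>

context sparam
begin

lemma wstep_in: "Sum_any (\<lambda>z. g z * wstep s z y) =
   (g (fst y - 1, snd y - 1) * hstep s (snd y - 1) (snd y) + g (fst y + 1, snd y - 1) * hstep s (snd y - 1) (snd y)
  + g (fst y - 1, snd y + 1) * hstep s (snd y + 1) (snd y) + g (fst y + 1, snd y + 1) * hstep s (snd y + 1) (snd y)) / 2"
proof -
  have "Sum_any (\<lambda>z. g z * wstep s z y) = (\<Sum>z\<in>nbrs y. g z * wstep s z y)"
    by (rule SA_expand) (auto dest: wstep_nz simp: nbrs_sym)
  then show ?thesis unfolding nbrs_eq wstep_def by (cases y) (simp add: field_simps)
qed

lemma factor: "snd x = 0 \<Longrightarrow> kp s {} k x y = hh k (fst y - fst x) * hv s k (snd y)"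
proof (induction k arbitrary: y)
  case 0 then show ?case by (cases x; cases y) auto
next
  case (Suc k)
  obtain a b where y: "y = (a, b)" by (cases y)
  have "kp s {} (Suc k) x y = Sum_any (\<lambda>z. kp s {} k x z * wstep s z y)" by simp
  also have "\<dots> = (hh k (a - 1 - fst x) + hh k (a + 1 - fst x)) / 2 * (hv s k (b - 1) * hstep s (b - 1) b + hv s k (b + 1) * hstep s (b + 1) b)"
    unfolding wstep_in using Suc by (simp add: y field_simps)
  also have "\<dots> = hh (Suc k) (fst y - fst x) * hv s (Suc k) (snd y)"
    by (simp add: y algebra_simps)
  finally show ?case .
qed

section \<open>Scale function of the height chain\<close>

definition Pi :: "nat \<Rightarrow> real" where
  "Pi i = (\<Prod>j\<in>{1..i}. (2 * real j + s) / (2 * real j - s))"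

definition phi :: "nat \<Rightarrow> real" where
  "phi r = (\<Sum>i<r. Pi i)"

lemma Pi_0[simp]: "Pi 0 = 1" by (simp add: Pi_def)

lemma Pi_Suc: "Pi (Suc i) = Pi i * ((2 * real (Suc i) + s) / (2 * real (Suc i) - s))"
  unfolding Pi_def by (simp add: prod.nat_ivl_Suc')

lemma Pi_pos: "0 < Pi i"
  unfolding Pi_def using s0 s1 by (intro prod_pos) (auto intro!: divide_pos_pos)

lemma phi_harm:
  assumes "r \<ge> 1"
  shows "(1/2 - s/(4 * real r)) * phi (r + 1) + (1/2 + s/(4 * real r)) * phi (r - 1) = phi r"
proof -
  obtain m where m: "r = Suc m" using assms by (cases r) auto
  have e1: "phi (r + 1) = phi r + Pi r" by (simp add: phi_def)
  have e2: "phi (r - 1) = phi r - Pi m" by (simp add: phi_def m)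
  have e3: "Pi r = Pi m * ((2 * real r + s) / (2 * real r - s))" using Pi_Suc[of m] m by simp
  have pos: "2 * real r - s > 0" using assms s1 by simp
  have rp: "real r > 0" using assms by simp
  have "(1/2 - s/(4 * real r)) * Pi r = (1/2 + s/(4 * real r)) * Pi m"
    unfolding e3 using pos rp by (simp add: field_simps)
  moreover have "(1/2 - s/(4 * real r)) * (phi r + Pi r) + (1/2 + s/(4 * real r)) * (phi r - Pi m)
     = phi r + ((1/2 - s/(4 * real r)) * Pi r - (1/2 + s/(4 * real r)) * Pi m)"
    by (simp add: ring_distribs)
  ultimately show ?thesis unfolding e1 e2 by simp
qed

lemma phi_step: "hstep s d (d+1) * phi (nat \<bar>d+1\<bar>) + hstep s d (d-1) * phi (nat \<bar>d-1\<bar>)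
   = phi (nat \<bar>d\<bar>) + (if d = 0 then 1 else 0)"
proof (cases "d = 0")
  case True then show ?thesis by (simp add: hstep_0 phi_def)
next
  case False
  show ?thesis
  proof (cases "d > 0")
    case True
    have a: "nat \<bar>d+1\<bar> = nat d + 1" "nat \<bar>d-1\<bar> = nat d - 1" "nat \<bar>d\<bar> = nat d" using True by auto
    have r: "real_of_int d = real (nat d)" using True by simp
    show ?thesis unfolding hstep_up[OF False] hstep_dn[OF False] a r
      using phi_harm[of "nat d"] True False by simp
  next
    case nd: False
    have a: "nat \<bar>d+1\<bar> = nat (-d) - 1" "nat \<bar>d-1\<bar> = nat (-d) + 1" "nat \<bar>d\<bar> = nat (-d)" using nd False by auto
    have r: "real_of_int d = - real (nat (-d))" using nd by simp
    have "1 \<le> nat (-d)" using nd False by simp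
    from phi_harm[OF this] show ?thesis unfolding hstep_up[OF False] hstep_dn[OF False] a r
      using False by (simp add: algebra_simps)
  qed
qed

lemma EV_phi: "EV s k (\<lambda>d. phi (nat \<bar>d\<bar>)) = (\<Sum>j<k. hv s j 0)"
proof (induction k)
  case 0
  have "Sum_any (\<lambda>d. hv s 0 d * phi (nat \<bar>d\<bar>)) = Sum_any (\<lambda>d::int. 0::real)"
    by (rule Sum_any.cong) (auto simp: phi_def)
  then show ?case by (simp add: EV_def)
next
  case (Suc k)
  have "EV s (Suc k) (\<lambda>d. phi (nat \<bar>d\<bar>)) = EV s k (\<lambda>d. phi (nat \<bar>d\<bar>) + (if d = 0 then 1 else 0))"
    unfolding EV_step by (simp only: phi_step)
  also have "\<dots> = EV s k (\<lambda>d. phi (nat \<bar>d\<bar>)) + hv s k 0" by (simp add: EV_add EV_delta)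
  finally show ?case using Suc by simp
qed

end


lemma ln_lower: fixes x :: real assumes "0 \<le> x" shows "2*x/(2+x) \<le> ln (1+x)"
proof -
  let ?f = "\<lambda>t::real. ln (1+t) - 2*t/(2+t)"
  have "?f 0 \<le> ?f x"
  proof (rule DERIV_nonneg_imp_nondecreasing[OF assms])
    fix t :: real assume t: "0 \<le> t" "t \<le> x"
    have "(?f has_real_derivative (1/(1+t) - 4/(2+t)^2)) (at t)"
      using t by (auto intro!: derivative_eq_intros simp: field_simps power2_eq_square)
    moreover have "0 \<le> 1/(1+t) - 4/(2+t)^2"
    proof -
      have "4 * (1+t) \<le> (2+t)^2" by (simp add: power2_eq_square algebra_simps)
      then have "4/(2+t)^2 \<le> 1/(1+t)" using t by (simp add: field_simps)
      then show ?thesis by simp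
    qed
    ultimately show "\<exists>y. (?f has_real_derivative y) (at t) \<and> 0 \<le> y" by blast
  qed
  then show ?thesis by simp
qed

lemma frac_helper: "(b::real) \<noteq> 0 \<Longrightarrow> b / a * ((b+1)/b) = (b+1) / a"
  by (cases "a = 0") (simp_all add: field_simps)

context sparam
begin

lemma ratio_upper:
  assumes b: "b > 0"
  shows "(2*b+1+2 * s)/(2*b+1) \<le> ((b+1)/b) powr s"
proof -
  have eq: "(b+1)/b = 1 + 1/b" using b by (simp add: field_simps)
  have pos: "1 + 1/b > 0" using b by (simp add: add_pos_pos)
  have "((b+1)/b) powr s = exp (s * ln (1 + 1/b))" unfolding eq powr_def using pos by simp
  also have "\<dots> \<ge> 1 + s * ln (1 + 1/b)" by (rule exp_ge_add_one_self)
  finally have e1: "1 + s * ln (1 + 1/b) \<le> ((b+1)/b) powr s" .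
  have "2*(1/b)/(2+1/b) \<le> ln (1 + 1/b)" using b by (intro ln_lower) simp
  moreover have "2*(1/b)/(2+1/b) = 2/(2*b+1)" using b by (simp add: field_simps)
  ultimately have "s * (2/(2*b+1)) \<le> s * ln (1 + 1/b)" using s0 by (intro mult_left_mono) auto
  moreover have "(2*b+1+2 * s)/(2*b+1) = 1 + s * (2/(2*b+1))" using b by (simp add: field_simps)
  ultimately show ?thesis using e1 by linarith
qed

lemma Pi_upper0: "Pi i \<le> ((real i + (1-s)/2) / ((1-s)/2)) powr s"
proof (induction i)
  case 0 then show ?case using s1 by simp
next
  case (Suc i)
  let ?a = "(1-s)/2"
  let ?b = "real i + ?a"
  have a0: "?a > 0" using s1 by simp
  have b0: "?b > 0" using a0 by (simp add: add_nonneg_pos)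
  have r: "(2 * real (Suc i) + s) / (2 * real (Suc i) - s) \<le> ((?b+1)/?b) powr s"
  proof -
    have e1: "2*?b+1 = 2 * real (Suc i) - s" by (simp add: field_simps)
    have e2: "2*?b+1+2 * s = 2 * real (Suc i) + s" by (simp add: field_simps)
    show ?thesis using ratio_upper[OF b0, unfolded e2, unfolded e1] .
  qed
  have rpos: "0 \<le> (2 * real (Suc i) + s) / (2 * real (Suc i) - s)" using s0 s1 by (intro divide_nonneg_pos) auto
  have "Pi (Suc i) = Pi i * ((2 * real (Suc i) + s) / (2 * real (Suc i) - s))" by (rule Pi_Suc)
  also have "\<dots> \<le> (?b / ?a) powr s * ((?b+1)/?b) powr s"
    by (rule mult_mono[OF Suc r]) (use Pi_pos rpos in \<open>auto intro: less_imp_le\<close>)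
  also have "\<dots> = (?b / ?a * ((?b+1)/?b)) powr s" by (rule powr_mult[symmetric])
  also have "?b / ?a * ((?b+1)/?b) = (?b+1) / ?a" using b0 by (rule frac_helper[OF less_imp_neq[symmetric]])
  also have "?b + 1 = real (Suc i) + ?a" by simp
  finally show ?case .
qed

definition Bc :: real where "Bc = 2 / (1 - s)"

lemma Bc_ge1: "1 \<le> Bc" using s0 s1 by (simp add: Bc_def field_simps)

lemma Pi_upper: "Pi i \<le> Bc * (real i + 1) powr s"
proof -
  let ?a = "(1-s)/2"
  have a0: "?a > 0" "?a \<le> 1" using s0 s1 by auto
  have "Pi i \<le> ((real i + ?a) / ?a) powr s" by (rule Pi_upper0)
  also have "\<dots> \<le> ((real i + 1) / ?a) powr s"
    using a0 s0 by (intro powr_mono2 divide_right_mono) auto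
  also have "((real i + 1) / ?a) powr s = ((real i + 1) * (1/?a)) powr s" by (simp only: times_divide_eq_right mult_1_right)
  also have "\<dots> = (real i + 1) powr s * (1/?a) powr s" by (rule powr_mult)
  also have "(1/?a) powr s \<le> (1/?a) powr 1"
    using a0 s1 by (intro powr_mono) (auto simp: field_simps)
  also have "(1/?a) powr 1 = Bc" using a0 by (simp add: Bc_def)
  finally show ?thesis by (simp add: mult.commute mult_left_mono)
qed

lemma Pi_lower: "(real i + 1) powr s \<le> Pi i"
proof (induction i)
  case 0 then show ?case by simp
next
  case (Suc i)
  let ?j = "real i + 1"
  have j0: "?j > 0" by simp
  have y: "((?j+1)/?j) powr s * 1 powr (1 - s) \<le> s * ((?j+1)/?j) + (1-s) * 1"
    using s0 s1 j0 by (intro Youngs_inequality_0) auto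
  have "s * ((?j+1)/?j) + (1-s) * 1 = 1 + s/?j" using j0 by (simp add: field_simps)
  also have "\<dots> \<le> (2 * real (Suc i) + s) / (2 * real (Suc i) - s)"
  proof -
    have d: "2 * real (Suc i) - s > 0" using s1 by simp
    have "s/?j \<le> 2 * s/(2 * real (Suc i) - s)" using s0 s1 j0 d by (simp add: field_simps)
    moreover have "(2 * real (Suc i) + s) / (2 * real (Suc i) - s) = 1 + 2 * s/(2 * real (Suc i) - s)"
      using d by (simp add: field_simps)
    ultimately show ?thesis by simp
  qed
  finally have rr: "((?j+1)/?j) powr s \<le> (2 * real (Suc i) + s) / (2 * real (Suc i) - s)" using y by simp
  have "(real (Suc i) + 1) powr s = ?j powr s * ((?j+1)/?j) powr s"
    using j0 by (simp add: powr_divide add.commute)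
  also have "\<dots> \<le> Pi i * ((2 * real (Suc i) + s) / (2 * real (Suc i) - s))"
    by (rule mult_mono[OF Suc rr]) (use Pi_pos in \<open>auto intro: less_imp_le\<close>)
  also have "\<dots> = Pi (Suc i)" by (simp add: Pi_Suc)
  finally show ?case .
qed

lemma phi_upper: "phi r \<le> Bc * real r powr (1 + s)"
proof -
  have "phi r \<le> (\<Sum>i<r. Bc * real r powr s)"
    unfolding phi_def
  proof (rule sum_mono)
    fix i assume "i \<in> {..<r}"
    then have "real i + 1 \<le> real r" by simp
    then have "(real i + 1) powr s \<le> real r powr s" using s0 by (intro powr_mono2) auto
    then show "Pi i \<le> Bc * real r powr s" using Pi_upper[of i] Bc_ge1 by (smt (verit) mult_left_mono)
  qed
  also have "\<dots> = Bc * (real r * real r powr s)" by simp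
  also have "real r * real r powr s = real r powr (1 + s)"
    by (cases "r = 0") (auto simp: powr_add)
  finally show ?thesis .
qed

lemma gauss_real: "(\<Sum>i<r. real i + 1) = real r * (real r + 1) / 2"
  by (induction r) (auto simp: field_simps)

lemma phi_lower:
  assumes A: "A > 0" "real r \<le> A"
  shows "A powr (s - 1) * (real r)^2 / 2 \<le> phi r"
proof -
  have "(\<Sum>i<r. A powr (s - 1) * (real i + 1)) \<le> phi r"
    unfolding phi_def
  proof (rule sum_mono)
    fix i assume "i \<in> {..<r}"
    then have ir: "real i + 1 \<le> A" using A by simp
    have "A powr (s - 1) \<le> (real i + 1) powr (s - 1)"
      using ir s1 by (intro powr_mono2') auto
    then have "A powr (s - 1) * (real i + 1) \<le> (real i + 1) powr (s - 1) * (real i + 1)"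
      by (intro mult_right_mono) auto
    also have "\<dots> = (real i + 1) powr (s - 1) * (real i + 1) powr 1" by simp
    also have "\<dots> = (real i + 1) powr (s - 1 + 1)" by (simp only: powr_add)
    also have "\<dots> = (real i + 1) powr s" by simp
    also have "\<dots> \<le> Pi i" by (rule Pi_lower)
    finally show "A powr (s - 1) * (real i + 1) \<le> Pi i" .
  qed
  moreover have "(\<Sum>i<r. A powr (s - 1) * (real i + 1)) = A powr (s - 1) * (real r * (real r + 1) / 2)"
    by (simp add: sum_distrib_left[symmetric] gauss_real)
  moreover have "A powr (s - 1) * ((real r)^2 / 2) \<le> A powr (s - 1) * (real r * (real r + 1) / 2)"
    by (intro mult_left_mono) (auto simp: power2_eq_square field_simps)
  ultimately show ?thesis by simp
qed

end


lemma powr_half_powr: "0 \<le> (x::real) \<Longrightarrow> (x powr (1/2)) powr t = x powr (t/2)"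
  by (simp add: powr_powr)

lemma powr_times_self: "0 < (x::real) \<Longrightarrow> x powr a * x = x powr (a + 1)"
  by (simp add: powr_add)

context sparam
begin

lemma EV_constc: "EV s k (\<lambda>d. c) = c"
  using EV_cmult[where c=c and g="\<lambda>d. 1" and k=k] EV_const by simp

definition Rv :: "nat \<Rightarrow> real" where "Rv k = (\<Sum>j<k. hv s j 0)"

lemma Rv_EV: "Rv k = EV s k (\<lambda>d. phi (nat \<bar>d\<bar>))"
  by (simp add: Rv_def EV_phi)

lemma Rv_mono: "k \<le> k' \<Longrightarrow> Rv k \<le> Rv k'"
  unfolding Rv_def by (rule sum_mono2) (auto intro: hv_nonneg)

lemma Rv_diff: "k \<le> k' \<Longrightarrow> Rv k' - Rv k = (\<Sum>j\<in>{k..<k'}. hv s j 0)"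
proof -
  assume "k \<le> k'"
  then have "{..<k'} = {..<k} \<union> {k..<k'}" by auto
  then have "Rv k' = (\<Sum>j\<in>{..<k} \<union> {k..<k'}. hv s j 0)" unfolding Rv_def by simp
  also have "\<dots> = Rv k + (\<Sum>j\<in>{k..<k'}. hv s j 0)"
    unfolding Rv_def by (rule sum.union_disjoint) auto
  finally have "Rv k' = Rv k + (\<Sum>j\<in>{k..<k'}. hv s j 0)" .
  then show ?thesis by simp
qed

lemma pow_split:
  assumes A: "A > 0"
  shows "\<bar>x\<bar> powr (1 + s) \<le> A powr (1 + s) + A powr (s - 1) * x^2"
proof (cases "\<bar>x\<bar> \<le> A")
  case True
  then have "\<bar>x\<bar> powr (1 + s) \<le> A powr (1 + s)" using s0 by (intro powr_mono2) auto
  moreover have "0 \<le> A powr (s - 1) * x^2" by simp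
  ultimately show ?thesis by linarith
next
  case False
  then have xp: "\<bar>x\<bar> > 0" using A by simp
  have "\<bar>x\<bar> powr (1 + s) = \<bar>x\<bar> powr ((s - 1) + 2)" by simp
  also have "\<dots> = \<bar>x\<bar> powr (s - 1) * \<bar>x\<bar> powr 2" by (rule powr_add)
  also have "\<dots> = \<bar>x\<bar> powr (s - 1) * x^2" using xp by simp
  also have "\<dots> \<le> A powr (s - 1) * x^2"
    using False A s1 by (intro mult_right_mono powr_mono2') auto
  finally show ?thesis using A by (smt (verit) powr_ge_zero)
qed

lemma Rv_upper: "Rv k \<le> 2 * Bc * real k powr ((1 + s)/2)"
proof (cases "k = 0")
  case True then show ?thesis by (simp add: Rv_def)
next
  case False
  then have kp: "real k > 0" by simp
  define A where "A = real k powr (1/2)"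
  have A0: "A > 0" using kp by (simp add: A_def)
  have pw: "phi (nat \<bar>d\<bar>) \<le> Bc * A powr (1 + s) * 1 + (Bc * A powr (s - 1)) * (real_of_int d)^2" for d
  proof -
    have "phi (nat \<bar>d\<bar>) \<le> Bc * real (nat \<bar>d\<bar>) powr (1 + s)" by (rule phi_upper)
    also have "real (nat \<bar>d\<bar>) = \<bar>real_of_int d\<bar>" by simp
    also have "Bc * \<bar>real_of_int d\<bar> powr (1 + s) \<le> Bc * (A powr (1 + s) + A powr (s - 1) * (real_of_int d)^2)"
      using Bc_ge1 by (intro mult_left_mono pow_split A0) auto
    finally show ?thesis by (simp add: algebra_simps)
  qed
  have "Rv k \<le> EV s k (\<lambda>d. Bc * A powr (1 + s) * 1 + (Bc * A powr (s - 1)) * (real_of_int d)^2)"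
    unfolding Rv_EV by (rule EV_mono) (rule pw)
  also have "\<dots> = Bc * A powr (1 + s) + Bc * A powr (s - 1) * EV s k (\<lambda>d. (real_of_int d)^2)"
    by (simp only: EV_add EV_cmult EV_constc mult_1_right)
  also have "\<dots> \<le> Bc * A powr (1 + s) + Bc * A powr (s - 1) * real k"
    using EV_sq_bounds[of k] Bc_ge1 by (intro add_left_mono mult_left_mono) auto
  finally have main: "Rv k \<le> Bc * A powr (1 + s) + Bc * (A powr (s - 1) * real k)" by (simp add: mult.assoc)
  have e1: "A powr (1 + s) = real k powr ((1 + s)/2)" unfolding A_def by (simp add: powr_half_powr)
  have e2: "A powr (s - 1) * real k = real k powr ((1 + s)/2)"
    unfolding A_def using kp by (simp add: powr_half_powr powr_times_self add_divide_distrib diff_divide_distrib)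
  show ?thesis using main unfolding e1 e2 by simp
qed

definition cs :: real where "cs = (1 - s) / 4 * (6 / (1 - s)) powr ((s - 1)/2)"

lemma cs_pos: "cs > 0" using s0 s1 by (simp add: cs_def)

lemma Rv_lower: assumes k: "k \<ge> 1" shows "cs * real k powr ((1 + s)/2) \<le> Rv k"
proof -
  have kp: "real k > 0" using k by simp
  define A where "A = (6 * real k / (1 - s)) powr (1/2)"
  have A0: "A > 0" using kp s1 by (simp add: A_def)
  have A2: "A^2 = 6 * real k / (1 - s)"
    unfolding A_def using kp s1 by (simp add: powr_half_sqrt)
  let ?c = "A powr (s - 1) / 2"
  have pw: "?c * (real_of_int d)^2 + (- ?c / A^2) * (real_of_int d)^4 \<le> phi (nat \<bar>d\<bar>)" for d
  proof (cases "\<bar>real_of_int d\<bar> \<le> A")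
    case True
    have "A powr (s - 1) * (real (nat \<bar>d\<bar>))^2 / 2 \<le> phi (nat \<bar>d\<bar>)"
      by (rule phi_lower[OF A0]) (use True in simp)
    moreover have "(real (nat \<bar>d\<bar>))^2 = (real_of_int d)^2" by simp
    ultimately have h1: "?c * (real_of_int d)^2 \<le> phi (nat \<bar>d\<bar>)" by simp
    have h2: "0 \<le> ?c / A^2 * (real_of_int d)^4" using A0 by simp
    have "(- ?c / A^2) * (real_of_int d)^4 = - (?c / A^2 * (real_of_int d)^4)" by simp
    then show ?thesis using h1 h2 by linarith
  next
    case False
    then have "A^2 < \<bar>real_of_int d\<bar>^2" using A0
      by (intro power_strict_mono) auto
    then have "A^2 < (real_of_int d)^2" by simp
    then have "A^2 * (real_of_int d)^2 \<le> (real_of_int d)^2 * (real_of_int d)^2"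
      by (intro mult_right_mono) auto
    then have "A^2 * (real_of_int d)^2 \<le> (real_of_int d)^4"
      by (simp add: power4_eq_xxxx power2_eq_square mult.assoc)
    then have "(real_of_int d)^2 \<le> (real_of_int d)^4 / A^2" using A0 by (simp add: field_simps)
    then have "?c * (real_of_int d)^2 \<le> ?c * ((real_of_int d)^4 / A^2)" by (intro mult_left_mono) auto
    moreover have "0 \<le> phi (nat \<bar>d\<bar>)" unfolding phi_def using Pi_pos by (simp add: sum_nonneg less_imp_le)
    ultimately show ?thesis by simp
  qed
  have "EV s k (\<lambda>d. ?c * (real_of_int d)^2 + (- ?c / A^2) * (real_of_int d)^4) \<le> Rv k"
    unfolding Rv_EV by (rule EV_mono) (rule pw)
  moreover have "EV s k (\<lambda>d. ?c * (real_of_int d)^2 + (- ?c / A^2) * (real_of_int d)^4)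
      = ?c * EV s k (\<lambda>d. (real_of_int d)^2) - ?c / A^2 * EV s k (\<lambda>d. (real_of_int d)^4)"
    by (simp only: EV_add EV_cmult)
  moreover have "?c * ((1 - s) * real k) - ?c / A^2 * (3 * (real k)^2) \<le> ?c * EV s k (\<lambda>d. (real_of_int d)^2) - ?c / A^2 * EV s k (\<lambda>d. (real_of_int d)^4)"
    using EV_sq_bounds[of k] EV_4_bound[of k] A0
    by (intro diff_mono mult_left_mono) (auto intro: divide_nonneg_pos)
  moreover have "?c * ((1 - s) * real k) - ?c / A^2 * (3 * (real k)^2) = A powr (s - 1) * (1 - s) * real k / 4"
    unfolding A2 using kp s1 by (simp add: field_simps power2_eq_square)
  moreover have "A powr (s - 1) * (1 - s) * real k / 4 = cs * real k powr ((1 + s)/2)"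
  proof -
    define P where "P = (6 / (1 - s)) powr ((s - 1)/2)"
    define Q where "Q = real k powr ((s - 1)/2)"
    have e1: "A powr (s - 1) = P * Q"
      unfolding A_def P_def Q_def using kp s1 by (simp add: powr_half_powr powr_mult[symmetric] mult.commute)
    have e2: "Q * real k = real k powr ((1 + s)/2)"
      unfolding Q_def using kp by (simp add: powr_times_self add_divide_distrib diff_divide_distrib)
    have e3: "P * Q * (1 - s) * real k / 4 = (1 - s) / 4 * P * (Q * real k)" by (simp add: field_simps)
    have e4: "cs = (1 - s) / 4 * P" unfolding cs_def P_def ..
    show ?thesis unfolding e1 e3 e2 e4 ..
  qed
  ultimately show ?thesis by linarith
qed

end


lemma conv_le:
  fixes f g :: "nat \<Rightarrow> real"
  assumes f: "\<And>i. 0 \<le> f i" and g: "\<And>i. 0 \<le> g i"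
  shows "(\<Sum>k<N. \<Sum>i\<le>k. f i * g (k - i)) \<le> (\<Sum>i<N. f i) * (\<Sum>j<N. g j)"
proof -
  have "(\<Sum>k<N. \<Sum>i\<le>k. f i * g (k - i)) = (\<Sum>(i,j)\<in>{(i,j). i+j < N}. f i * g j)"
    by (rule sum.triangle_reindex[symmetric])
  also have "\<dots> \<le> (\<Sum>(i,j)\<in>{..<N} \<times> {..<N}. f i * g j)"
    by (rule sum_mono2) (auto intro: mult_nonneg_nonneg f g)
  also have "\<dots> = (\<Sum>i<N. \<Sum>j<N. f i * g j)" by (rule sum.cartesian_product[symmetric])
  also have "\<dots> = (\<Sum>i<N. f i) * (\<Sum>j<N. g j)" by (simp add: sum_product)
  finally show ?thesis .
qed

lemma SA_axis:
  assumes fin: "finite {u. g u \<noteq> 0}"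
  shows "Sum_any (\<lambda>w::int\<times>int. if snd w = 0 then g (fst w) else 0) = Sum_any (g::int \<Rightarrow> real)"
proof -
  let ?S = "{u. g u \<noteq> 0}"
  have "Sum_any (\<lambda>w::int\<times>int. if snd w = 0 then g (fst w) else 0) = sum (\<lambda>w. if snd w = 0 then g (fst w) else 0) ((\<lambda>u. (u, 0::int)) ` ?S)"
  proof (rule SA_expand)
    show "finite ((\<lambda>u. (u, 0::int)) ` ?S)" using fin by simp
    fix w :: "int \<times> int" assume "(if snd w = 0 then g (fst w) else 0) \<noteq> 0"
    then have "snd w = 0" "g (fst w) \<noteq> 0" by (auto split: if_splits)
    then show "w \<in> (\<lambda>u. (u, 0::int)) ` ?S" by (intro image_eqI[of _ _ "fst w"]) (auto simp: prod_eq_iff)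
  qed
  also have "\<dots> = sum g ?S" by (subst sum.reindex) (auto simp: inj_on_def)
  also have "\<dots> = Sum_any g" by (rule SA_expand[symmetric]) (use fin in auto)
  finally show ?thesis .
qed

lemma fin_shift: "finite {d. g d \<noteq> (0::real)} \<Longrightarrow> finite {u. g (u + (c::int)) \<noteq> 0}"
proof -
  assume f: "finite {d. g d \<noteq> (0::real)}"
  have sub: "{u. g (u + c) \<noteq> 0} \<subseteq> (\<lambda>d. d - c) ` {d. g d \<noteq> 0}"
  proof
    fix u assume "u \<in> {u. g (u + c) \<noteq> 0}"
    then show "u \<in> (\<lambda>d. d - c) ` {d. g d \<noteq> 0}" by (intro image_eqI[of _ _ "u + c"]) auto
  qed
  show ?thesis by (rule finite_subset[OF sub]) (use f in simp)
qed

context sparam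
begin

lemma kp_le_free: "kp s A k x y \<le> kp s {} k x y"
proof (induction k arbitrary: y)
  case 0 then show ?case by auto
next
  case (Suc k)
  have finw: "finite {z. g z * wstep s z y \<noteq> 0}" for g :: "int \<times> int \<Rightarrow> real"
    by (rule SA_fin_sup[of "nbrs y"]) (auto dest: wstep_nz simp: nbrs_sym)
  show ?case
  proof (cases "y \<in> A")
    case True then show ?thesis using kp_nonneg[of "{}" "Suc k" x y] by simp
  next
    case False
    have "Sum_any (\<lambda>z. kp s A k x z * wstep s z y) \<le> Sum_any (\<lambda>z. kp s {} k x z * wstep s z y)"
      by (rule SA_mono[OF finw finw]) (intro mult_right_mono Suc wstep_nonneg)
    then show ?thesis using False by simp
  qed
qed

lemma fe_single: "Sum_any (\<lambda>b. fe s A {y} j z b * h b) = fe s A {y} j z y * h y"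
proof -
  have "Sum_any (\<lambda>b. fe s A {y} j z b * h b) = Sum_any (\<lambda>b. if b = y then fe s A {y} j z y * h y else 0)"
    by (rule Sum_any.cong) (auto simp: fe_def)
  then show ?thesis by simp
qed

lemma first_passage:
  assumes yA: "y \<notin> A"
  shows "(\<Sum>k<N. kp s A k z y) \<le> (\<Sum>k<N. kp s A k y y)"
proof -
  have AB: "A \<inter> {y} = {}" using yA by auto
  let ?f = "\<lambda>j. fe s A {y} j z y"
  let ?g = "\<lambda>i. kp s A i y y"
  have dec: "kp s A k z y = (\<Sum>j\<le>k. ?f j * ?g (k - j))" for k
  proof -
    have "kp s A k z y = kp s (A \<union> {y}) k z y + (\<Sum>j\<le>k. Sum_any (\<lambda>b. fe s A {y} j z b * kp s A (k - j) b y))"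
      by (rule FE[OF AB])
    moreover have "kp s (A \<union> {y}) k z y = 0" by (rule kp_in_A) simp
    ultimately show ?thesis by (simp add: fe_single)
  qed
  have fsum: "(\<Sum>j<N. ?f j) \<le> 1"
  proof (cases N)
    case 0 then show ?thesis by simp
  next
    case (Suc k)
    have "(\<Sum>j\<le>k. Sum_any (fe s A {y} j z)) + Sum_any (kp s (A \<union> {y}) k z) \<le> 1" by (rule mass)
    moreover have "0 \<le> Sum_any (kp s (A \<union> {y}) k z)" by (rule SA_nonneg) (rule kp_nonneg)
    moreover have "Sum_any (fe s A {y} j z) = ?f j" for j using fe_single[of A y j z "\<lambda>_. 1"] by simp
    ultimately show ?thesis using Suc by (simp add: lessThan_Suc_atMost)
  qed
  have "(\<Sum>k<N. kp s A k z y) = (\<Sum>k<N. \<Sum>j\<le>k. ?f j * ?g (k - j))" by (simp add: dec)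
  also have "\<dots> \<le> (\<Sum>j<N. ?f j) * (\<Sum>i<N. ?g i)"
    by (rule conv_le) (auto intro: fe_nonneg kp_nonneg)
  also have "\<dots> \<le> 1 * (\<Sum>i<N. ?g i)"
    by (rule mult_right_mono[OF fsum]) (auto intro: sum_nonneg kp_nonneg)
  finally show ?thesis by simp
qed

lemma Lw_fin: "finite {w. (if w \<in> Lset n then kp s {} i b w else 0) \<noteq> 0}"
  by (rule SA_fin_sup[of "bx b i"]) (auto dest: kp_supp split: if_splits)

lemma L_upper:
  assumes b: "snd b = 0"
  shows "Sum_any (\<lambda>w. if w \<in> Lset n then kp s {} i b w else 0) \<le> hv s i 0"
proof -
  let ?h = "\<lambda>w::int\<times>int. if snd w = 0 then hh i (fst w - fst b) * hv s i 0 else 0"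
  have fin2: "finite {w. ?h w \<noteq> 0}"
  proof (rule finite_subset[of _ "bx b i"])
    show "{w. ?h w \<noteq> 0} \<subseteq> bx b i"
    proof
      fix w assume "w \<in> {w. ?h w \<noteq> 0}"
      then have "snd w = 0" "hh i (fst w - fst b) \<noteq> 0" by (auto split: if_splits)
      then show "w \<in> bx b i" using hh_supp[of i "fst w - fst b"] b by (cases w) (auto simp: bx_def abs_le_iff mem_Times_iff)
    qed
  qed simp
  have "Sum_any (\<lambda>w. if w \<in> Lset n then kp s {} i b w else 0) \<le> Sum_any ?h"
  proof (rule SA_mono[OF Lw_fin fin2])
    fix w
    show "(if w \<in> Lset n then kp s {} i b w else 0) \<le> ?h w"
    proof (cases "w \<in> Lset n")
      case True
      then have "snd w = 0" by (simp add: Lset_def)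
      then show ?thesis using True factor[OF b, of i w] by simp
    next
      case False then show ?thesis by (auto intro!: mult_nonneg_nonneg hh_nonneg hv_nonneg)
    qed
  qed
  also have "Sum_any ?h = Sum_any (\<lambda>u. hh i (u - fst b) * hv s i 0)"
    by (rule SA_axis) (rule finite_subset[OF _ fin_shift[OF hh_fin[of i], of "- fst b"]], auto)
  also have "\<dots> = Sum_any (\<lambda>d. hh i d * hv s i 0)"
    using SA_shift[of "\<lambda>u. hh i (u - fst b) * hv s i 0" "fst b"] by simp
  also have "\<dots> = Sum_any (hh i) * hv s i 0"
    by (rule SA_cmult_left[symmetric]) (rule hh_fin)
  also have "Sum_any (hh i) = 1" using EH_const[of i] by (simp add: EH_def)
  finally show ?thesis by simp
qed

lemma L_lower:
  assumes a: "even a" "\<bar>a\<bar> \<le> 2 * int n" and k: "2 * (4 * n + 2)^2 \<le> k"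
  shows "hv s k 0 / 12 \<le> Sum_any (\<lambda>w. if w \<in> Lset n then kp s {} k (a, 0) w else 0)"
proof (cases "even k")
  case False
  then have "hv s k 0 = 0" using hv_par[of k 0] by auto
  then show ?thesis by (simp add: SA_nonneg kp_nonneg)
next
  case True
  let ?c = "\<lambda>u::int. even u \<and> 2 * (int n + 1) \<le> \<bar>u\<bar>"
  have k1: "k \<ge> 1" using k by (simp add: le_trans[OF _ k])
  have "Sum_any (\<lambda>w. if w \<in> Lset n then kp s {} k (a, 0) w else 0)
      = Sum_any (\<lambda>w::int\<times>int. if snd w = 0 then (if ?c (fst w) then hh k (fst w - a) * hv s k 0 else 0) else 0)"
    by (rule Sum_any.cong) (auto simp: Lset_def factor)
  also have "\<dots> = Sum_any (\<lambda>u. if ?c u then hh k (u - a) * hv s k 0 else 0)"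
    by (rule SA_axis) (rule finite_subset[OF _ fin_shift[OF hh_fin[of k], of "- a"]], auto)
  also have "\<dots> = Sum_any (\<lambda>d. if ?c (d + a) then hh k d * hv s k 0 else 0)"
    using SA_shift[of "\<lambda>u. if ?c u then hh k (u - a) * hv s k 0 else 0" a, symmetric]
    by (simp only: add_diff_cancel_right')
  finally have eq: "Sum_any (\<lambda>w. if w \<in> Lset n then kp s {} k (a, 0) w else 0) = Sum_any (\<lambda>d. if ?c (d + a) then hh k d * hv s k 0 else 0)" .
  have pw: "hh k d * (if (real_of_int d)^2 \<ge> real k / 2 then 1 else 0) * hv s k 0 \<le> (if ?c (d + a) then hh k d * hv s k 0 else 0)" for d
  proof (cases "hh k d = 0 \<or> \<not> (real_of_int d)^2 \<ge> real k / 2")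
    case True
    have nn: "0 \<le> hh k d * hv s k 0" by (intro mult_nonneg_nonneg hh_nonneg hv_nonneg)
    have L0: "hh k d * (if (real_of_int d)^2 \<ge> real k / 2 then 1 else 0) * hv s k 0 = 0" using True by auto
    have R0: "0 \<le> (if ?c (d + a) then hh k d * hv s k 0 else 0)"
      by (cases "?c (d + a)") (simp_all only: if_True if_False nn order_refl simp_thms)
    show ?thesis using L0 R0 by linarith
  next
    case False
    then have hd: "hh k d \<noteq> 0" and dk: "(real_of_int d)^2 \<ge> real k / 2" by auto
    have "even (int k + d)" by (rule hh_par[OF hd])
    then have ed: "even d" using True by simp
    have "real (2 * (4 * n + 2)^2) \<le> real k" using k by (rule of_nat_mono)
    then have "(real (4 * n + 2))^2 \<le> real k / 2" by simp
    then have "(real (4 * n + 2))^2 \<le> (real_of_int d)^2" using dk by linarith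
    then have "real (4 * n + 2) \<le> \<bar>real_of_int d\<bar>" using abs_le_square_iff[of "real (4*n+2)" "real_of_int d"] by simp
    then have "int (4 * n + 2) \<le> \<bar>d\<bar>" by linarith
    then have "?c (d + a)" using ed a by auto
    then show ?thesis using dk by simp
  qed
  have fin1: "finite {d. hh k d * (if (real_of_int d)^2 \<ge> real k / 2 then 1 else 0) * hv s k 0 \<noteq> 0}"
    by (rule finite_subset[OF _ hh_fin[of k]]) auto
  have fin2: "finite {d. (if ?c (d + a) then hh k d * hv s k 0 else 0) \<noteq> 0}"
    by (rule finite_subset[OF _ hh_fin[of k]]) auto
  have "hv s k 0 / 12 \<le> EH k (\<lambda>d. if (real_of_int d)^2 \<ge> real k / 2 then 1 else 0) * hv s k 0"
    using mult_right_mono[OF EH_PZ[OF k1] hv_nonneg[of k 0]] by simp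
  also have "\<dots> = Sum_any (\<lambda>d. hh k d * (if (real_of_int d)^2 \<ge> real k / 2 then 1 else 0) * hv s k 0)"
    unfolding EH_def by (rule SA_cmult_left) (rule finite_subset[OF _ hh_fin[of k]], auto)
  also have "\<dots> \<le> Sum_any (\<lambda>d. if ?c (d + a) then hh k d * hv s k 0 else 0)"
    by (rule SA_mono[OF fin1 fin2 pw])
  finally show ?thesis using eq by simp
qed

end


lemma pow2_between: "(N::nat) \<ge> 1 \<Longrightarrow> \<exists>I. N \<le> 2^I \<and> 2^I < 2 * N"
proof -
  assume N: "N \<ge> 1"
  have ex: "\<exists>i. N \<le> 2^i" by (intro exI[of _ N]) (simp add: less_imp_le less_exp)
  define I where "I = (LEAST i. N \<le> 2^i)"
  have I1: "N \<le> 2^I" unfolding I_def by (rule LeastI_ex[OF ex])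
  show ?thesis
  proof (cases I)
    case 0 then show ?thesis using I1 N by (intro exI[of _ 0]) auto
  next
    case (Suc J)
    have "\<not> N \<le> 2^J" unfolding I_def
      using not_less_Least[of J "\<lambda>i. N \<le> 2^i"] Suc I_def by auto
    then show ?thesis using I1 Suc by (intro exI[of _ I]) auto
  qed
qed

context sparam
begin

lemma killing:
  assumes a: "even a" "\<bar>a\<bar> \<le> 2 * int n" and mT: "2 * (4 * n + 2)^2 \<le> T"
  shows "(Rv (Suc T) - Rv (2 * (4 * n + 2)^2)) / 12 \<le> (1 - Sum_any (kp s (Lset n) T (a, 0))) * Rv (Suc T)"
proof -
  let ?L = "Lset n"
  let ?x = "(a, 0::int)"
  let ?m = "2 * (4 * n + 2)^2"
  define Lw where "Lw i b = Sum_any (\<lambda>w. if w \<in> ?L then kp s {} i b w else 0)" for i b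
  define F where "F j = Sum_any (fe s {} ?L j ?x)" for j
  have AB: "{} \<inter> ?L = {}" by simp
  have Lw_nn: "0 \<le> Lw i b" for i b unfolding Lw_def by (rule SA_nonneg) (simp add: kp_nonneg)
  have decomp: "Lw k ?x = (\<Sum>j\<le>k. Sum_any (\<lambda>b. fe s {} ?L j ?x b * Lw (k - j) b))" for k
  proof -
    let ?G = "\<lambda>j b w. fe s {} ?L j ?x b * (if w \<in> ?L then kp s {} (k - j) b w else 0)"
    have G_supp: "?G j b w \<noteq> 0 \<Longrightarrow> j \<le> k \<Longrightarrow> w \<in> bx ?x k \<and> b \<in> bx ?x j" for j b w
    proof -
      assume g: "?G j b w \<noteq> 0" and j: "j \<le> k"
      then have "fe s {} ?L j ?x b \<noteq> 0" "kp s {} (k - j) b w \<noteq> 0" by (auto split: if_splits)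
      then have "b \<in> bx ?x j" "w \<in> bx b (k - j)" by (auto dest: fe_supp kp_supp)
      then show ?thesis using box_trans[of b ?x j w "k - j"] j by auto
    qed
    have "Lw k ?x = Sum_any (\<lambda>w. \<Sum>j\<le>k. Sum_any (\<lambda>b. ?G j b w))"
      unfolding Lw_def
    proof (rule Sum_any.cong)
      fix w
      show "(if w \<in> ?L then kp s {} k ?x w else 0) = (\<Sum>j\<le>k. Sum_any (\<lambda>b. ?G j b w))"
      proof (cases "w \<in> ?L")
        case True
        have "kp s {} k ?x w = kp s ({} \<union> ?L) k ?x w + (\<Sum>j\<le>k. Sum_any (\<lambda>b. fe s {} ?L j ?x b * kp s {} (k - j) b w))"
          by (rule FE[OF AB])
        moreover have "kp s ({} \<union> ?L) k ?x w = 0" using True by (simp add: kp_in_A)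
        ultimately show ?thesis using True by simp
      next
        case False then show ?thesis by simp
      qed
    qed
    also have "\<dots> = (\<Sum>j\<le>k. Sum_any (\<lambda>w. Sum_any (\<lambda>b. ?G j b w)))"
    proof (rule SA_sum)
      fix j assume j: "j \<in> {..k}"
      show "finite {w. Sum_any (\<lambda>b. ?G j b w) \<noteq> 0}"
      proof (rule SA_fin_sup[of "bx ?x k"])
        fix w assume "Sum_any (\<lambda>b. ?G j b w) \<noteq> 0"
        then obtain b where "?G j b w \<noteq> 0" by (rule Sum_any.not_neutral_obtains_not_neutral)
        then show "w \<in> bx ?x k" using G_supp j by auto
      qed simp
    qed simp
    also have "\<dots> = (\<Sum>j\<le>k. Sum_any (\<lambda>b. Sum_any (\<lambda>w. ?G j b w)))"
    proof (rule sum.cong[OF refl])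
      fix j assume j: "j \<in> {..k}"
      show "Sum_any (\<lambda>w. Sum_any (\<lambda>b. ?G j b w)) = Sum_any (\<lambda>b. Sum_any (\<lambda>w. ?G j b w))"
        by (rule SA_swap[of "bx ?x k" "bx ?x j"]) (use G_supp j in auto)
    qed
    also have "\<dots> = (\<Sum>j\<le>k. Sum_any (\<lambda>b. fe s {} ?L j ?x b * Lw (k - j) b))"
      unfolding Lw_def
      by (rule sum.cong[OF refl], rule Sum_any.cong, rule SA_cmult_right[symmetric], rule Lw_fin)
    finally show ?thesis .
  qed
  have bound: "Lw k ?x \<le> (\<Sum>j\<le>k. F j * hv s (k - j) 0)" for k
  proof -
    have "Sum_any (\<lambda>b. fe s {} ?L j ?x b * Lw i b) \<le> F j * hv s i 0" for j i
    proof -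
      have fin1: "finite {b. fe s {} ?L j ?x b * Lw i b \<noteq> 0}"
        by (rule finite_subset[OF _ fe_fin[of "{}" ?L j ?x]]) auto
      have fin2: "finite {b. fe s {} ?L j ?x b * hv s i 0 \<noteq> 0}"
        by (rule finite_subset[OF _ fe_fin[of "{}" ?L j ?x]]) auto
      have "Sum_any (\<lambda>b. fe s {} ?L j ?x b * Lw i b) \<le> Sum_any (\<lambda>b. fe s {} ?L j ?x b * hv s i 0)"
      proof (rule SA_mono[OF fin1 fin2])
        fix b
        show "fe s {} ?L j ?x b * Lw i b \<le> fe s {} ?L j ?x b * hv s i 0"
        proof (cases "fe s {} ?L j ?x b = 0")
          case True then show ?thesis by simp
        next
          case False
          then have "b \<in> ?L" by (auto simp: fe_def split: if_splits)
          then have "snd b = 0" by (simp add: Lset_def)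
          then have "Lw i b \<le> hv s i 0" unfolding Lw_def by (rule L_upper)
          then show ?thesis by (rule mult_left_mono) (rule fe_nonneg)
        qed
      qed
      also have "\<dots> = F j * hv s i 0" unfolding F_def by (rule SA_cmult_left[symmetric]) (rule fe_fin)
      finally show ?thesis .
    qed
    then show ?thesis unfolding decomp by (intro sum_mono) auto
  qed
  have Nup: "(\<Sum>k<Suc T. Lw k ?x) \<le> (\<Sum>j<Suc T. F j) * Rv (Suc T)"
  proof -
    have "(\<Sum>k<Suc T. Lw k ?x) \<le> (\<Sum>k<Suc T. \<Sum>j\<le>k. F j * hv s (k - j) 0)"
      by (rule sum_mono) (rule bound)
    also have "\<dots> \<le> (\<Sum>j<Suc T. F j) * (\<Sum>i<Suc T. hv s i 0)"
      by (rule conv_le) (auto simp: F_def intro: SA_nonneg fe_nonneg hv_nonneg)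
    finally show ?thesis by (simp add: Rv_def)
  qed
  have massT: "(\<Sum>j<Suc T. F j) + Sum_any (kp s ?L T ?x) \<le> 1"
    using mass[where k=T and A="{}" and B="?L" and x="?x"] by (simp add: F_def lessThan_Suc_atMost)
  have Nlow: "(Rv (Suc T) - Rv ?m) / 12 \<le> (\<Sum>k<Suc T. Lw k ?x)"
  proof -
    have eq: "Rv (Suc T) - Rv ?m = (\<Sum>j\<in>{?m..<Suc T}. hv s j 0)" using mT by (intro Rv_diff) auto
    have "(Rv (Suc T) - Rv ?m) / 12 = (\<Sum>j\<in>{?m..<Suc T}. hv s j 0 / 12)" by (simp only: eq sum_divide_distrib)
    also have "\<dots> \<le> (\<Sum>j\<in>{?m..<Suc T}. Lw j ?x)"
      unfolding Lw_def by (rule sum_mono) (rule L_lower[OF a], auto)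
    also have "\<dots> \<le> (\<Sum>k<Suc T. Lw k ?x)"
      by (rule sum_mono2) (auto intro: Lw_nn)
    finally show ?thesis .
  qed
  have Rnn: "0 \<le> Rv (Suc T)" unfolding Rv_def by (rule sum_nonneg) (rule hv_nonneg)
  have "(\<Sum>j<Suc T. F j) * Rv (Suc T) \<le> (1 - Sum_any (kp s ?L T ?x)) * Rv (Suc T)"
    using massT Rnn by (intro mult_right_mono) auto
  then show ?thesis using Nlow Nup by linarith
qed

lemma G_bound:
  assumes y: "y \<notin> Lset n" and kill: "Sum_any (kp s (Lset n) T y) \<le> 23/24"
  shows "(\<Sum>k<N. kp s (Lset n) k y y) \<le> 24 * (\<Sum>k<T. kp s (Lset n) k y y)"
proof -
  let ?L = "Lset n"
  define G where "G M = (\<Sum>k<M. kp s ?L k y y)" for M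
  have Gnn: "0 \<le> G M" for M unfolding G_def by (auto intro: sum_nonneg kp_nonneg)
  have split: "G (T + M) = G T + (\<Sum>k<M. kp s ?L (T + k) y y)" for M
    unfolding G_def by (induction M) auto
  have "(\<Sum>k<N. kp s ?L (T + k) y y) = (\<Sum>k<N. Sum_any (\<lambda>z. kp s ?L T y z * kp s ?L k z y))"
    by (simp add: kp_CK)
  also have "\<dots> = Sum_any (\<lambda>z. \<Sum>k<N. kp s ?L T y z * kp s ?L k z y)"
    by (rule SA_sum[symmetric]) (auto intro: finite_subset[OF _ kp_fin[of ?L T y]])
  also have "\<dots> = Sum_any (\<lambda>z. kp s ?L T y z * (\<Sum>k<N. kp s ?L k z y))"
    by (simp add: sum_distrib_left)
  also have "\<dots> \<le> Sum_any (\<lambda>z. kp s ?L T y z * G N)"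
  proof (rule SA_mono)
    show "finite {z. kp s ?L T y z * (\<Sum>k<N. kp s ?L k z y) \<noteq> 0}"
      by (rule finite_subset[OF _ kp_fin[of ?L T y]]) auto
    show "finite {z. kp s ?L T y z * G N \<noteq> 0}"
      by (rule finite_subset[OF _ kp_fin[of ?L T y]]) auto
    fix z show "kp s ?L T y z * (\<Sum>k<N. kp s ?L k z y) \<le> kp s ?L T y z * G N"
      unfolding G_def by (rule mult_left_mono[OF first_passage[OF y] kp_nonneg])
  qed
  also have "\<dots> = Sum_any (kp s ?L T y) * G N"
    by (rule SA_cmult_left[symmetric]) (rule kp_fin)
  also have "\<dots> \<le> 23/24 * G N" by (rule mult_right_mono[OF kill Gnn])
  finally have X: "(\<Sum>k<N. kp s ?L (T + k) y y) \<le> 23/24 * G N" .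
  have "G N \<le> G (T + N)" unfolding G_def by (rule sum_mono2) (auto intro: kp_nonneg)
  also have "\<dots> \<le> G T + 23/24 * G N" using split[of N] X by simp
  finally have "G N \<le> 24 * G T" by simp
  then show ?thesis by (simp add: G_def)
qed

definition Dc :: real where "Dc = max 1 (2 * Bc * 2 powr ((1 + s)/2) / (2 powr (s/2) - 1))"

lemma Dc_ge1: "1 \<le> Dc" by (simp add: Dc_def)

lemma Dc_prop: "2 * Bc * 2 powr ((1 + s)/2) \<le> Dc * (2 powr (s/2) - 1)"
proof -
  have p: "2 powr (s/2) - 1 > 0" using s0 by simp
  have "2 * Bc * 2 powr ((1 + s)/2) / (2 powr (s/2) - 1) \<le> Dc" by (simp add: Dc_def)
  then show ?thesis using p by (simp add: field_simps)
qed

lemma dyadic: "(\<Sum>k<2^I. hh k 0 * hv s k 0) \<le> Dc * ((2::real)^I) powr (s/2)"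
proof (induction I)
  case 0 then show ?case using Dc_ge1 by simp
next
  case (Suc I)
  define X where "X = (2::real)^I"
  have X1: "X \<ge> 1" by (simp add: X_def)
  have blk: "(\<Sum>k\<in>{2^I..<2^Suc I}. hh k 0 * hv s k 0) \<le> 2 * Bc * 2 powr ((1 + s)/2) * X powr (s/2)"
  proof -
    have "(\<Sum>k\<in>{2^I..<2^Suc I}. hh k 0 * hv s k 0) \<le> (\<Sum>k\<in>{2^I..<2^Suc I}. X powr (-1/2) * hv s k 0)"
    proof (rule sum_mono)
      fix k assume k: "k \<in> {2^I..<(2::nat)^Suc I}"
      then have kX: "X \<le> real k" unfolding X_def by (auto simp: of_nat_le_iff[symmetric])
      have k1: "k \<ge> 1" using k by (auto intro: le_trans[OF one_le_power])
      have "hh k 0 \<le> 1 / sqrt (real k)" by (rule hh_diag[OF k1])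
      also have "\<dots> \<le> 1 / sqrt X" using kX X1 by (intro divide_left_mono real_sqrt_le_mono) auto
      also have "1 / sqrt X = X powr (-1/2)" using X1 by (simp add: powr_minus_divide powr_half_sqrt)
      finally show "hh k 0 * hv s k 0 \<le> X powr (-1/2) * hv s k 0" by (rule mult_right_mono) (rule hv_nonneg)
    qed
    also have "\<dots> = X powr (-1/2) * (Rv (2^Suc I) - Rv (2^I))"
      by (simp add: Rv_diff sum_distrib_left)
    also have "\<dots> \<le> X powr (-1/2) * Rv (2^Suc I)"
      using Rv_mono[of 0 "2^I"] by (intro mult_left_mono) (auto simp: Rv_def)
    also have "\<dots> \<le> X powr (-1/2) * (2 * Bc * real (2^Suc I) powr ((1 + s)/2))"
      by (intro mult_left_mono Rv_upper) simp
    also have "real (2^Suc I) = 2 * X" by (simp add: X_def)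
    also have "X powr (-1/2) * (2 * Bc * (2 * X) powr ((1 + s)/2)) = 2 * Bc * 2 powr ((1 + s)/2) * (X powr (-1/2) * X powr ((1 + s)/2))"
      by (simp add: powr_mult)
    also have "X powr (-1/2) * X powr ((1 + s)/2) = X powr (s/2)"
      by (simp add: powr_add[symmetric] add_divide_distrib)
    finally show ?thesis .
  qed
  have se: "{..<(2::nat)^Suc I} = {..<2^I} \<union> {2^I..<2^Suc I}" by auto
  have "(\<Sum>k<2^Suc I. hh k 0 * hv s k 0) = (\<Sum>k\<in>{..<2^I} \<union> {2^I..<2^Suc I}. hh k 0 * hv s k 0)"
    unfolding se ..
  also have "\<dots> = (\<Sum>k<2^I. hh k 0 * hv s k 0) + (\<Sum>k\<in>{2^I..<2^Suc I}. hh k 0 * hv s k 0)"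
    by (rule sum.union_disjoint) auto
  also have "\<dots> \<le> Dc * X powr (s/2) + 2 * Bc * 2 powr ((1 + s)/2) * X powr (s/2)"
    using Suc blk unfolding X_def by linarith
  also have "\<dots> \<le> Dc * X powr (s/2) + Dc * (2 powr (s/2) - 1) * X powr (s/2)"
    using Dc_prop by (intro add_left_mono mult_right_mono) auto
  also have "\<dots> = Dc * (2 * X) powr (s/2)" by (simp add: powr_mult algebra_simps)
  finally show ?case by (simp add: X_def)
qed

end


theorem proposition6p2:
  fixes s :: real
  assumes "0 < s" and "s < 1"
  shows "\<exists>C>0. \<forall>n::nat. n \<ge> 1 \<longrightarrow>
           (\<forall>k1 k2 :: int. \<bar>k1\<bar> \<le> int n \<and> \<bar>k2\<bar> \<le> int n \<longrightarrow>
              green s n (2 * k1, 0) (2 * k2, 0) \<le> ennreal (C * real n powr ((s + 2) - 2)))"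
proof -
  interpret sparam s using assms by unfold_locales
  define K :: nat where "K = nat \<lceil>(4 * Bc / cs)^2\<rceil> + 1"
  define C where "C = 24 * Dc * (144 * real K) powr (s/2)"
  have K1: "K \<ge> 1" by (simp add: K_def)
  have Kge: "(4 * Bc / cs)^2 \<le> real K"
  proof -
    have "(4 * Bc / cs)^2 \<le> real_of_int \<lceil>(4 * Bc / cs)^2\<rceil>" by (rule le_of_int_ceiling)
    then show ?thesis unfolding K_def by simp linarith
  qed
  have sqrtK: "4 * Bc / cs \<le> real K powr (1/2)"
  proof -
    have nn: "0 \<le> 4 * Bc / cs" using Bc_ge1 cs_pos by simp
    have "4 * Bc / cs = sqrt ((4 * Bc / cs)^2)" using real_sqrt_abs[of "4 * Bc / cs"] abs_of_nonneg[OF nn] by simp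
    also have "\<dots> \<le> sqrt (real K)" using Kge by (rule real_sqrt_le_mono)
    also have "\<dots> = real K powr (1/2)" by (simp add: powr_half_sqrt)
    finally show ?thesis .
  qed
  have Cpos: "C > 0" using Dc_ge1 K1 by (simp add: C_def)
  show ?thesis
  proof (intro exI[of _ C] conjI allI impI)
    show "C > 0" by (rule Cpos)
    fix n :: nat and k1 k2 :: int
    assume n: "n \<ge> 1" and kk: "\<bar>k1\<bar> \<le> int n \<and> \<bar>k2\<bar> \<le> int n"
    define m where "m = 2 * (4 * n + 2)^2"
    have m1: "m \<ge> 1" by (simp add: m_def)
    have Km1: "K * m \<ge> 1" using K1 m1 by simp
    obtain I where I: "K * m \<le> 2^I" "2^I < 2 * (K * m)" using pow2_between[OF Km1] by blast
    define T where "T = (2::nat)^I"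
    let ?L = "Lset n"
    define y where "y = (2 * k2, 0::int)"
    define x where "x = (2 * k1, 0::int)"
    have yL: "y \<notin> ?L" using kk by (auto simp: y_def Lset_def)
    have mT: "m \<le> T" using I K1 unfolding T_def by (metis le_trans mult_le_mono1 mult_1)
    have kill: "Sum_any (kp s ?L T y) \<le> 23/24"
    proof -
      let ?S = "Sum_any (kp s ?L T y)"
      let ?a = "(1 + s)/2"
      have key: "(Rv (Suc T) - Rv m) / 12 \<le> (1 - ?S) * Rv (Suc T)"
        unfolding y_def m_def by (rule killing) (use kk mT in \<open>auto simp: m_def\<close>)
      have Rlow: "cs * real (Suc T) powr ?a \<le> Rv (Suc T)" by (rule Rv_lower) simp
      have Rpos: "Rv (Suc T) > 0" using Rlow cs_pos by (smt (verit) mult_pos_pos powr_gt_zero of_nat_0_less_iff zero_less_Suc)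
      have Rm: "Rv m \<le> 2 * Bc * real m powr ?a" by (rule Rv_upper)
      have "real K * real m \<le> real (Suc T)"
      proof -
        have "K * m \<le> Suc T" using I unfolding T_def by simp
        then show ?thesis by (metis of_nat_le_iff of_nat_mult)
      qed
      then have "(real K * real m) powr ?a \<le> real (Suc T) powr ?a"
        using s0 by (intro powr_mono2) auto
      moreover have "(real K * real m) powr ?a = real K powr ?a * real m powr ?a" by (rule powr_mult)
      moreover have "real K powr (1/2) \<le> real K powr ?a"
        using K1 s0 by (intro powr_mono) auto
      ultimately have "real K powr (1/2) * real m powr ?a \<le> real (Suc T) powr ?a"
        by (smt (verit) mult_right_mono powr_ge_zero)
      then have "4 * Bc / cs * real m powr ?a \<le> real (Suc T) powr ?a"
        using sqrtK by (smt (verit) mult_right_mono powr_ge_zero)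
      then have "4 * Bc * real m powr ?a \<le> cs * real (Suc T) powr ?a"
        using cs_pos by (simp add: field_simps)
      then have "Rv m \<le> Rv (Suc T) / 2" using Rm Rlow by linarith
      then have "Rv (Suc T) / 24 \<le> (Rv (Suc T) - Rv m) / 12" by (simp add: field_simps)
      then have "Rv (Suc T) / 24 \<le> (1 - ?S) * Rv (Suc T)" using key by (rule order_trans)
      then have "1 / 24 \<le> 1 - ?S" using Rpos by (simp add: field_simps)
      then show ?thesis by linarith
    qed
    have GN: "(\<Sum>k<N. kp s ?L k x y) \<le> C * real n powr s" for N
    proof -
      have "(\<Sum>k<N. kp s ?L k x y) \<le> (\<Sum>k<N. kp s ?L k y y)" by (rule first_passage[OF yL])
      also have "\<dots> \<le> 24 * (\<Sum>k<T. kp s ?L k y y)" by (rule G_bound[OF yL kill])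
      also have "(\<Sum>k<T. kp s ?L k y y) \<le> (\<Sum>k<T. hh k 0 * hv s k 0)"
      proof (rule sum_mono)
        fix k
        have "kp s ?L k y y \<le> kp s {} k y y" by (rule kp_le_free)
        also have "\<dots> = hh k 0 * hv s k 0" by (simp add: factor y_def)
        finally show "kp s ?L k y y \<le> hh k 0 * hv s k 0" .
      qed
      also have "(\<Sum>k<T. hh k 0 * hv s k 0) \<le> Dc * ((2::real)^I) powr (s/2)"
        unfolding T_def by (rule dyadic)
      also have "((2::real)^I) powr (s/2) \<le> (144 * real K * (real n)^2) powr (s/2)"
      proof (rule powr_mono2)
        show "0 \<le> s/2" using s0 by simp
        show "0 \<le> (2::real)^I" by simp
        have "real (2^I) \<le> real (2 * (K * m))" using I by (simp only: of_nat_le_iff)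
        then have "(2::real)^I \<le> 2 * real K * real m" by simp
        also have "real m \<le> 72 * (real n)^2"
        proof -
          have "real m = 2 * (4 * real n + 2)^2" by (simp add: m_def)
          also have "\<dots> \<le> 2 * (6 * real n)^2" using n by (intro mult_left_mono power_mono) auto
          finally show ?thesis by (simp add: power2_eq_square)
        qed
        then have "2 * real K * real m \<le> 2 * real K * (72 * (real n)^2)" by (intro mult_left_mono) auto
        finally show "(2::real)^I \<le> 144 * real K * (real n)^2" by simp
      qed
      also have "(144 * real K * (real n)^2) powr (s/2) = (144 * real K) powr (s/2) * real n powr s"
      proof -
        have e1: "(real n)^2 = real n powr 2" by simp
        have e2: "(real n powr 2) powr (s/2) = real n powr s" by (subst powr_powr) simp
        show ?thesis unfolding powr_mult e1 e2 ..
      qed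
      finally have "(\<Sum>k<N. kp s ?L k x y) \<le> 24 * (Dc * ((144 * real K) powr (s/2) * real n powr s))"
        using Dc_ge1 by (smt (verit) mult_left_mono)
      then show ?thesis by (simp add: C_def mult_ac)
    qed
    have "green s n x y = suminf (\<lambda>k. ennreal (kp s ?L k x y))"
      by (simp add: green_def killed_eq)
    also have "\<dots> \<le> ennreal (C * real n powr s)"
    proof (rule suminf_le_const)
      show "summable (\<lambda>k. ennreal (kp s ?L k x y))" by simp
      fix N
      have "(\<Sum>k<N. ennreal (kp s ?L k x y)) = ennreal (\<Sum>k<N. kp s ?L k x y)"
        by (rule sum_ennreal) (rule kp_nonneg)
      also have "\<dots> \<le> ennreal (C * real n powr s)" by (rule ennreal_leI) (rule GN)
      finally show "(\<Sum>k<N. ennreal (kp s ?L k x y)) \<le> ennreal (C * real n powr s)" .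
    qed
    finally show "green s n (2 * k1, 0) (2 * k2, 0) \<le> ennreal (C * real n powr ((s + 2) - 2))"
      by (simp add: x_def y_def)
  qed
qed


end
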